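(* Let $G_1,\dots,G_m$ be finite simple connected graphs, each with at least two vertices, let $n_i=|V(G_i)|$ and $\Delta_i$ the maximum degree of $G_i$, let $G$ be the Cartesian product of $G_1,\dots,G_m$, and $n=|V(G)|=n_1n_2\cdots n_m$. (a) $$\frac{\min\{\iota_e(G_i):1\le i\le m\}\,n}{4(\Delta_1+\dots+\Delta_m)^2}\le c_{\infty}(G)\le \frac{n\,c_{\infty}(G_j)}{n_j}\quad\text{for every }1\le j\le m.$$ (b) If every $G_i$ is a path and $n_1=\max\{n_i:1\le i\le m\}$, then $\frac{n}{4n_1m^2}\le c_{\infty}(G)\le \frac{n}{n_1}$. (c) If every $G_i$ is a cycle, $n_1=\max\{n_i:1\le i\le m\}$, and $n_1$ is even, then $\frac{n}{2n_1m^2}\le c_{\infty}(G)\le\frac{2n}{n_1}$.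
   Context: The Cartesian product of $G_1,\dots,G_m$ has vertex set $V(G_1)\times\dots\times V(G_m)$, with $(u_1,\dots,u_m)$ adjacent to $(v_1,\dots,v_m)$ iff there is an index $j$ with $u_i=v_i$ for all $i\ne j$ and $u_jv_j\in E(G_j)$. For a graph $H$ on $N$ vertices, $\partial S$ is the set of edges with exactly one endpoint in $S$ and $\iota_e(H)=\min_{0<|S|\le N/2}|\partial S|/|S|$. Cops and Robber with an infinitely fast robber: the game is played on a graph $G$. A set of cops first choose initial vertices (several cops may share a vertex); then the robber, knowing their positions, chooses a vertex. Then the players move in alternating rounds, cops first. In the cops' turn each cop either stays or moves to an adjacent vertex; in the robber's turn she either stays or moves along any path of $G$ starting at her current vertex that contains no vertex currently occupied by a cop. The cops win if at some point a cop moves to the vertex occupied by the robber. $c_{\infty}(G)$ is the minimum number of cops for which the cops have a strategy that guarantees a win. *)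

theory Defs
  imports Complex_Main
begin

definition simple_graph :: "'v set \<Rightarrow> ('v \<Rightarrow> 'v \<Rightarrow> bool) \<Rightarrow> bool" where
  "simple_graph V E \<longleftrightarrow> finite V \<and> (\<forall>x y. E x y \<longrightarrow> x \<in> V \<and> y \<in> V)
     \<and> (\<forall>x y. E x y \<longrightarrow> E y x) \<and> (\<forall>x. \<not> E x x)"

definition connected_graph :: "'v set \<Rightarrow> ('v \<Rightarrow> 'v \<Rightarrow> bool) \<Rightarrow> bool" where
  "connected_graph V E \<longleftrightarrow> (\<forall>x\<in>V. \<forall>y\<in>V. E\<^sup>*\<^sup>* x y)"

definition degree :: "'v set \<Rightarrow> ('v \<Rightarrow> 'v \<Rightarrow> bool) \<Rightarrow> 'v \<Rightarrow> nat" where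
  "degree V E x = card {y\<in>V. E x y}"

definition max_degree :: "'v set \<Rightarrow> ('v \<Rightarrow> 'v \<Rightarrow> bool) \<Rightarrow> nat" where
  "max_degree V E = Max (degree V E ` V)"

definition edge_boundary :: "'v set \<Rightarrow> ('v \<Rightarrow> 'v \<Rightarrow> bool) \<Rightarrow> 'v set \<Rightarrow> ('v \<times> 'v) set" where
  "edge_boundary V E S = {(x, y). x \<in> S \<and> y \<in> V - S \<and> E x y}"

definition edge_iso :: "'v set \<Rightarrow> ('v \<Rightarrow> 'v \<Rightarrow> bool) \<Rightarrow> real" where
  "edge_iso V E = Min ((\<lambda>S. real (card (edge_boundary V E S)) / real (card S))
       ` {S. S \<subseteq> V \<and> 0 < card S \<and> 2 * card S \<le> card V})"

definition prod_V :: "nat \<Rightarrow> (nat \<Rightarrow> 'a set) \<Rightarrow> 'a list set" where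
  "prod_V m V = {xs. length xs = m \<and> (\<forall>i<m. xs ! i \<in> V i)}"

definition prod_E :: "nat \<Rightarrow> (nat \<Rightarrow> 'a set) \<Rightarrow> (nat \<Rightarrow> 'a \<Rightarrow> 'a \<Rightarrow> bool)
     \<Rightarrow> 'a list \<Rightarrow> 'a list \<Rightarrow> bool" where
  "prod_E m V E xs ys \<longleftrightarrow> xs \<in> prod_V m V \<and> ys \<in> prod_V m V \<and>
     (\<exists>j<m. E j (xs ! j) (ys ! j) \<and> (\<forall>i<m. i \<noteq> j \<longrightarrow> xs ! i = ys ! i))"

definition is_path_graph :: "'v set \<Rightarrow> ('v \<Rightarrow> 'v \<Rightarrow> bool) \<Rightarrow> bool" where
  "is_path_graph V E \<longleftrightarrow> (\<exists>f. bij_betw f {0..<card V} V \<and>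
     (\<forall>x y. E x y \<longleftrightarrow> (\<exists>i<card V. \<exists>j<card V. x = f i \<and> y = f j \<and> (i + 1 = j \<or> j + 1 = i))))"

definition is_cycle_graph :: "'v set \<Rightarrow> ('v \<Rightarrow> 'v \<Rightarrow> bool) \<Rightarrow> bool" where
  "is_cycle_graph V E \<longleftrightarrow> 3 \<le> card V \<and> (\<exists>f. bij_betw f {0..<card V} V \<and>
     (\<forall>x y. E x y \<longleftrightarrow> (\<exists>i<card V. \<exists>j<card V. x = f i \<and> y = f j \<and>
        (j = (i + 1) mod card V \<or> i = (j + 1) mod card V))))"

text \<open>Cops and robber with an infinitely fast robber.\<close>

definition cop_step :: "('v \<Rightarrow> 'v \<Rightarrow> bool) \<Rightarrow> 'v list \<Rightarrow> 'v list \<Rightarrow> bool" where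
  "cop_step E cs cs' \<longleftrightarrow> length cs' = length cs \<and>
     (\<forall>i<length cs. cs' ! i = cs ! i \<or> E (cs ! i) (cs' ! i))"

definition robber_reach :: "('v \<Rightarrow> 'v \<Rightarrow> bool) \<Rightarrow> 'v set \<Rightarrow> 'v \<Rightarrow> 'v \<Rightarrow> bool" where
  "robber_reach E C r r' \<longleftrightarrow> (\<lambda>x y. E x y \<and> x \<notin> C \<and> y \<notin> C)\<^sup>*\<^sup>* r r'"

text \<open>cops_force E cs r: it is the cops' turn, cops at cs, robber at r; the cops can force
  a capture in finitely many rounds (the winning region of this reachability game).\<close>

inductive cops_force :: "('v \<Rightarrow> 'v \<Rightarrow> bool) \<Rightarrow> 'v list \<Rightarrow> 'v \<Rightarrow> bool" for E where
  "cop_step E cs cs' \<Longrightarrow>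
   (r \<in> set cs' \<or> (\<forall>r'. robber_reach E (set cs') r r' \<longrightarrow> cops_force E cs' r'))
   \<Longrightarrow> cops_force E cs r"

definition cops_win :: "'v set \<Rightarrow> ('v \<Rightarrow> 'v \<Rightarrow> bool) \<Rightarrow> nat \<Rightarrow> bool" where
  "cops_win V E k \<longleftrightarrow> (\<exists>cs. length cs = k \<and> set cs \<subseteq> V \<and> (\<forall>r\<in>V. cops_force E cs r))"

definition c_inf :: "'v set \<Rightarrow> ('v \<Rightarrow> 'v \<Rightarrow> bool) \<Rightarrow> nat" where
  "c_inf V E = (LEAST k. cops_win V E k)"

end

theory Submission
  imports Defs
begin


lemma cop_step_la2: "cop_step E cs cs' \<longleftrightarrow> list_all2 (\<lambda>a b. b = a \<or> E a b) cs cs'"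
  unfolding cop_step_def list_all2_conv_all_nth by auto

lemma cops_win_card:
  assumes "finite V"
  shows "cops_win V E (card V)"
proof -
  obtain xs where xs: "set xs = V" "distinct xs" using finite_distinct_list[OF assms] by blast
  have "cops_force E xs r" if "r \<in> V" for r
    by (rule cops_force.intros[of E xs xs]) (auto simp: cop_step_def xs that)
  then show ?thesis unfolding cops_win_def using xs distinct_card[of xs] by auto
qed

lemma c_inf_le: "cops_win V E k \<Longrightarrow> c_inf V E \<le> k"
  unfolding c_inf_def by (rule Least_le)

lemma c_inf_win: "finite V \<Longrightarrow> cops_win V E (c_inf V E)"
  unfolding c_inf_def using cops_win_card by (metis LeastI)

lemma c_inf_ge:
  assumes "finite V" "\<And>k. real k < x \<Longrightarrow> \<not> cops_win V E k"
  shows "x \<le> real (c_inf V E)"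
  using c_inf_win[OF assms(1), of E] assms(2) by force

lemma list_all2_concat_my:
  "list_all2 (list_all2 P) xss yss \<Longrightarrow> list_all2 P (concat xss) (concat yss)"
  by (induction xss yss rule: list_all2_induct) (auto intro: list_all2_appendI)



section \<open>Product strategy (upper bound)\<close>

definition lift :: "'a list list \<Rightarrow> nat \<Rightarrow> 'a list \<Rightarrow> 'a list list" where
  "lift qs j cs = concat (map (\<lambda>w. map (\<lambda>c. w[j:=c]) cs) qs)"

lemma set_lift: "set (lift qs j cs) = {w[j:=c] | w c. w \<in> set qs \<and> c \<in> set cs}"
  unfolding lift_def by auto

lemma length_lift: "length (lift qs j cs) = length qs * length cs"
  unfolding lift_def by (induction qs) auto

lemma prod_V_update: "xs \<in> prod_V m V \<Longrightarrow> i < m \<Longrightarrow> c \<in> V i \<Longrightarrow> xs[i:=c] \<in> prod_V m V"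
  unfolding prod_V_def by (auto simp: nth_list_update)

lemma prod_V_length: "xs \<in> prod_V m V \<Longrightarrow> length xs = m"
  unfolding prod_V_def by auto

lemma prod_V_nth: "xs \<in> prod_V m V \<Longrightarrow> i < m \<Longrightarrow> xs ! i \<in> V i"
  unfolding prod_V_def by auto

lemma simple_graphD: assumes "simple_graph V E" "E x y"
  shows "x \<in> V" "y \<in> V" "E y x" "x \<noteq> y"
  using assms unfolding simple_graph_def by metis+

lemma prod_E_update:
  assumes "w \<in> prod_V m V" "j < m" "E j c c'" "simple_graph (V j) (E j)"
  shows "prod_E m V E (w[j:=c]) (w[j:=c'])"
proof -
  have l: "length w = m" using assms(1) prod_V_length by blast
  have "c \<in> V j" "c' \<in> V j" using simple_graphD[OF assms(4,3)] by auto
  then show ?thesis unfolding prod_E_def using assms l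
    by (auto intro!: prod_V_update exI[of _ j] simp: nth_list_update)
qed

lemma cop_step_lift:
  assumes "cop_step (E j) cs cs'" "\<forall>w\<in>set qs. w \<in> prod_V m V" "j < m" "simple_graph (V j) (E j)"
  shows "cop_step (prod_E m V E) (lift qs j cs) (lift qs j cs')"
proof -
  have "list_all2 (\<lambda>a b. b = a \<or> E j a b) cs cs'" using assms(1) cop_step_la2 by metis
  have W: "list_all2 (\<lambda>a b. b = a \<or> prod_E m V E a b) (map (\<lambda>c. w[j:=c]) cs) (map (\<lambda>c. w[j:=c]) cs')"
    if "w \<in> set qs" for w
  proof -
    have "list_all2 (\<lambda>c c'. w[j:=c'] = w[j:=c] \<or> prod_E m V E (w[j:=c]) (w[j:=c'])) cs cs'"
      using \<open>list_all2 _ cs cs'\<close>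
      by (rule list_all2_mono) (use prod_E_update[of w m V j E] assms that in auto)
    then show ?thesis by (simp add: list_all2_map1 list_all2_map2)
  qed
  then have "list_all2 (list_all2 (\<lambda>a b. b = a \<or> prod_E m V E a b))
     (map (\<lambda>w. map (\<lambda>c. w[j:=c]) cs) qs) (map (\<lambda>w. map (\<lambda>c. w[j:=c]) cs') qs)"
  proof -
    have "\<And>ws. set ws \<subseteq> set qs \<Longrightarrow> list_all2 (list_all2 (\<lambda>a b. b = a \<or> prod_E m V E a b))
     (map (\<lambda>w. map (\<lambda>c. w[j:=c]) cs) ws) (map (\<lambda>w. map (\<lambda>c. w[j:=c]) cs') ws)"
    proof -
      fix ws show "set ws \<subseteq> set qs \<Longrightarrow> ?thesis ws" by (induction ws) (use W in auto)
    qed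
    then show ?thesis by blast
  qed
  then show ?thesis unfolding cop_step_la2 lift_def by (rule list_all2_concat_my)
qed

lemma reach_proj:
  assumes "robber_reach (prod_E m V E) (set (lift qs j cs)) ys ys'" "ys \<in> prod_V m V" "j < m"
    and qs: "set qs = {u \<in> prod_V m V. u ! j = d0}" and d0: "d0 \<in> V j"
  shows "ys' \<in> prod_V m V \<and> robber_reach (E j) (set cs) (ys ! j) (ys' ! j)"
  using assms(1) unfolding robber_reach_def
proof (induction rule: rtranclp_induct)
  case base
  then show ?case using assms(2) by auto
next
  case (step a b)
  have inL: "z ! j \<notin> set cs" if "z \<in> prod_V m V" "z \<notin> set (lift qs j cs)" for z
  proof
    assume "z ! j \<in> set cs"
    moreover have "z[j:=d0] \<in> set qs" using qs prod_V_update[OF that(1) \<open>j<m\<close> d0] \<open>j<m\<close> that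
      by (auto simp: prod_V_length)
    moreover have "z = (z[j:=d0])[j:=z!j]" by simp
    ultimately have "z \<in> set (lift qs j cs)" unfolding set_lift by blast
    then show False using that by blast
  qed
  from step(2) have E: "prod_E m V E a b" and na: "a \<notin> set (lift qs j cs)" and nb: "b \<notin> set (lift qs j cs)" by auto
  then have aP: "a \<in> prod_V m V" and bP: "b \<in> prod_V m V" unfolding prod_E_def by auto
  obtain i where i: "i < m" "E i (a!i) (b!i)" "\<forall>l<m. l \<noteq> i \<longrightarrow> a!l = b!l"
    using E unfolding prod_E_def by auto
  show ?case
  proof (cases "i = j")
    case True
    then have "E j (a!j) (b!j)" using i by simp
    then have "(\<lambda>x y. E j x y \<and> x \<notin> set cs \<and> y \<notin> set cs) (a!j) (b!j)"
      using inL aP bP na nb by auto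
    then show ?thesis using step.IH bP rtranclp.rtrancl_into_rtrancl[of "\<lambda>x y. E j x y \<and> x \<notin> set cs \<and> y \<notin> set cs" "ys!j" "a!j" "b!j"] by blast
  next
    case False
    then have "a!j = b!j" using i \<open>j<m\<close> by auto
    then show ?thesis using step.IH bP by simp
  qed
qed

lemma lift_force:
  assumes sg: "simple_graph (V j) (E j)" and j: "j < m"
    and qs: "set qs = {u \<in> prod_V m V. u ! j = d0}" and d0: "d0 \<in> V j"
  shows "cops_force (E j) cs x \<Longrightarrow> \<forall>ys\<in>prod_V m V. ys ! j = x \<longrightarrow> cops_force (prod_E m V E) (lift qs j cs) ys"
proof (induction rule: cops_force.induct)
  case (1 cs cs' r)
  have qsP: "\<forall>w\<in>set qs. w \<in> prod_V m V" using qs by auto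
  show ?case
  proof (intro ballI impI)
    fix ys assume ys: "ys \<in> prod_V m V" "ys ! j = r"
    have step: "cop_step (prod_E m V E) (lift qs j cs) (lift qs j cs')"
      using cop_step_lift[of E j cs cs' qs m V, OF 1(1) qsP j sg] .
    show "cops_force (prod_E m V E) (lift qs j cs) ys"
    proof (rule cops_force.intros[OF step])
      show "ys \<in> set (lift qs j cs') \<or>
        (\<forall>r'. robber_reach (prod_E m V E) (set (lift qs j cs')) ys r' \<longrightarrow> cops_force (prod_E m V E) (lift qs j cs') r')"
      proof (cases "r \<in> set cs'")
        case True
        have "ys[j:=d0] \<in> set qs" using qs prod_V_update[OF ys(1) j d0] j ys
          by (auto simp: prod_V_length)
        moreover have "ys = (ys[j:=d0])[j:=r]" using ys by (metis list_update_id list_update_overwrite)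
        ultimately show ?thesis using True unfolding set_lift by blast
      next
        case False
        then have H: "\<forall>r'. robber_reach (E j) (set cs') r r' \<longrightarrow>
             (\<forall>ys\<in>prod_V m V. ys ! j = r' \<longrightarrow> cops_force (prod_E m V E) (lift qs j cs') ys)"
          using 1(2) by blast
        show ?thesis
        proof (rule disjI2, intro allI impI)
          fix r' assume "robber_reach (prod_E m V E) (set (lift qs j cs')) ys r'"
          from reach_proj[OF this ys(1) j qs d0] H ys show "cops_force (prod_E m V E) (lift qs j cs') r'"
            by auto
        qed
      qed
    qed
  qed
qed



lemma finite_prod_V: assumes "\<forall>i<m. finite (V i)" shows "finite (prod_V m V)"
proof -
  have "prod_V m V \<subseteq> {xs. set xs \<subseteq> (\<Union>i<m. V i) \<and> length xs = m}"
    unfolding prod_V_def by (fastforce simp: in_set_conv_nth)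
  moreover have "finite {xs. set xs \<subseteq> (\<Union>i<m. V i) \<and> length xs = m}"
    by (rule finite_lists_length_eq) (use assms in auto)
  ultimately show ?thesis by (rule finite_subset)
qed

lemma bij_slice:
  assumes "j < m" "d0 \<in> V j"
  shows "bij_betw (\<lambda>(w,c). w[j:=c]) ({u \<in> prod_V m V. u ! j = d0} \<times> V j) (prod_V m V)"
proof -
  let ?Q = "{u \<in> prod_V m V. u ! j = d0}"
  have inj: "inj_on (\<lambda>(w,c). w[j:=c]) (?Q \<times> V j)"
  proof (rule inj_onI)
    fix x y assume hx: "x \<in> ?Q \<times> V j" and hy: "y \<in> ?Q \<times> V j"
      and e: "(\<lambda>(w,c). w[j:=c]) x = (\<lambda>(w,c). w[j:=c]) y"
    obtain w c w' c' where xy: "x = (w,c)" "y = (w',c')" by force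
    have h: "w \<in> prod_V m V" "w!j = d0" "c \<in> V j" "w' \<in> prod_V m V" "w'!j = d0"
      "c' \<in> V j" "w[j := c] = w'[j := c']" using hx hy e xy by auto
    have l: "length w = m" "length w' = m" using h prod_V_length by blast+
    have "c = c'" using arg_cong[OF h(7), of "\<lambda>x. x!j"] l assms by simp
    moreover have "w = w'"
      using arg_cong[OF h(7), of "\<lambda>x. x[j:=d0]"] h(2,5) by (metis list_update_id list_update_overwrite)
    ultimately show "x = y" using xy by simp
  qed
  have "(\<lambda>(w,c). w[j:=c]) ` (?Q \<times> V j) = prod_V m V"
  proof
    show "(\<lambda>(w,c). w[j:=c]) ` (?Q \<times> V j) \<subseteq> prod_V m V" using prod_V_update assms(1) by fastforce
    show "prod_V m V \<subseteq> (\<lambda>(w,c). w[j:=c]) ` (?Q \<times> V j)"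
    proof
      fix u assume u: "u \<in> prod_V m V"
      have l: "length u = m" using u prod_V_length by blast
      have "u = (u[j:=d0])[j:=u!j]" by simp
      moreover have "u[j:=d0] \<in> ?Q" using prod_V_update[OF u assms] l assms by auto
      moreover have "u!j \<in> V j" using prod_V_nth[OF u assms(1)] .
      ultimately show "u \<in> (\<lambda>(w,c). w[j:=c]) ` (?Q \<times> V j)" by force
    qed
  qed
  with inj show ?thesis unfolding bij_betw_def by blast
qed

lemma card_slice:
  assumes "j < m" "d0 \<in> V j"
  shows "card (prod_V m V) = card {u \<in> prod_V m V. u ! j = d0} * card (V j)"
  using bij_betw_same_card[OF bij_slice[of j m d0 V, OF assms]] by (simp add: card_cartesian_product)

lemma sum_slice:
  assumes "j < m" "d0 \<in> V j"
  shows "(\<Sum>u\<in>prod_V m V. F u) = (\<Sum>w\<in>{u \<in> prod_V m V. u ! j = d0}. \<Sum>c\<in>V j. F (w[j:=c]))"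
proof -
  have "(\<Sum>u\<in>prod_V m V. F u) = (\<Sum>x\<in>{u \<in> prod_V m V. u ! j = d0} \<times> V j. F ((\<lambda>(w,c). w[j:=c]) x))"
    using sum.reindex_bij_betw[OF bij_slice[of j m d0 V, OF assms], of F] by simp
  also have "\<dots> = (\<Sum>w\<in>{u \<in> prod_V m V. u ! j = d0}. \<Sum>c\<in>V j. F (w[j:=c]))"
    by (simp add: sum.cartesian_product split_def)
  finally show ?thesis .
qed

theorem upper_bound:
  assumes fin: "\<forall>i<m. finite (V i)" and sg: "simple_graph (V j) (E j)" and j: "j < m"
    and ne: "V j \<noteq> {}"
  shows "real (c_inf (prod_V m V) (prod_E m V E))
     \<le> real (card (prod_V m V)) * real (c_inf (V j) (E j)) / real (card (V j))"
proof -
  obtain d0 where d0: "d0 \<in> V j" using ne by blast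
  let ?Q = "{u \<in> prod_V m V. u ! j = d0}"
  have fP: "finite (prod_V m V)" using finite_prod_V[OF fin] .
  then have fQ: "finite ?Q" by simp
  obtain qs where qs: "set qs = ?Q" "distinct qs" using finite_distinct_list[OF fQ] by blast
  have fVj: "finite (V j)" using fin j by simp
  obtain cs where cs: "length cs = c_inf (V j) (E j)" "set cs \<subseteq> V j" "\<forall>r\<in>V j. cops_force (E j) cs r"
    using c_inf_win[OF fVj, of "E j"] unfolding cops_win_def by blast
  have "cops_win (prod_V m V) (prod_E m V E) (card ?Q * c_inf (V j) (E j))"
    unfolding cops_win_def
  proof (intro exI conjI)
    show "length (lift qs j cs) = card ?Q * c_inf (V j) (E j)"
      using length_lift[of qs j cs] cs(1) qs distinct_card[of qs] by simp
    show "set (lift qs j cs) \<subseteq> prod_V m V"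
      unfolding set_lift using qs cs(2) prod_V_update j by fastforce
    show "\<forall>r\<in>prod_V m V. cops_force (prod_E m V E) (lift qs j cs) r"
      using lift_force[of V j E m qs d0, OF sg j qs(1) d0] cs(3) prod_V_nth j by blast
  qed
  then have "c_inf (prod_V m V) (prod_E m V E) \<le> card ?Q * c_inf (V j) (E j)" by (rule c_inf_le)
  moreover have "card (prod_V m V) = card ?Q * card (V j)" using card_slice[of j m d0 V, OF j d0] .
  moreover have "card (V j) > 0" using fVj ne by (simp add: card_gt_0_iff)
  ultimately show ?thesis by (simp add: field_simps) (metis of_nat_le_iff of_nat_mult)
qed



section \<open>Paths and cycles: few cops suffice\<close>

lemma path_chase:
  fixes N :: nat assumes bij: "bij_betw f {0..<N} V"
    and Ech: "\<forall>x y. E x y \<longleftrightarrow> (\<exists>i<N. \<exists>j<N. x = f i \<and> y = f j \<and> (i + 1 = j \<or> j + 1 = i))"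
  shows "i < t \<Longrightarrow> t < N \<Longrightarrow> cops_force E [f i] (f t)"
proof (induction "N - i" arbitrary: i t rule: less_induct)
  case less
  have inj: "\<And>a b. a < N \<Longrightarrow> b < N \<Longrightarrow> f a = f b \<Longrightarrow> a = b"
    using bij unfolding bij_betw_def inj_on_def by auto
  have Eff: "E (f a) (f b) \<longleftrightarrow> (a + 1 = b \<or> b + 1 = a)" if "a < N" "b < N" for a b
  proof
    assume "E (f a) (f b)"
    then obtain i' j' where h: "i' < N" "j' < N" "f a = f i'" "f b = f j'" "i' + 1 = j' \<or> j' + 1 = i'"
      by (auto simp: Ech)
    have "i' = a" "j' = b" using inj h that by metis+
    then show "a + 1 = b \<or> b + 1 = a" using h by simp
  next
    assume "a + 1 = b \<or> b + 1 = a"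
    then show "E (f a) (f b)" using that by (auto simp: Ech)
  qed
  have step: "cop_step E [f i] [f (i+1)]"
    unfolding cop_step_def using Eff less.prems by auto
  show ?case
  proof (rule cops_force.intros[OF step])
    show "f t \<in> set [f (i + 1)] \<or> (\<forall>r'. robber_reach E (set [f (i + 1)]) (f t) r' \<longrightarrow> cops_force E [f (i + 1)] r')"
    proof (cases "t = i + 1")
      case True then show ?thesis by simp
    next
      case False
      have inv: "\<exists>t'. i + 1 < t' \<and> t' < N \<and> r' = f t'" if "robber_reach E (set [f (i + 1)]) (f t) r'" for r'
        using that unfolding robber_reach_def
      proof (induction rule: rtranclp_induct)
        case base have "i + 1 < t" using False less.prems by auto
        then show ?case using less.prems by blast
      next
        case (step a b)
        obtain ta where ta: "i + 1 < ta" "ta < N" "a = f ta" using step.IH by blast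
        have "E a b" "b \<noteq> f (i+1)" using step.hyps by auto
        then obtain i1 j1 where ij: "i1 < N" "j1 < N" "a = f i1" "b = f j1" "i1 + 1 = j1 \<or> j1 + 1 = i1"
          by (auto simp: Ech)
        have "i1 = ta" using inj ij ta by blast
        moreover have "j1 \<noteq> i + 1" using ij \<open>b \<noteq> f (i+1)\<close> by auto
        ultimately have "i + 1 < j1" using ij ta by auto
        then show ?case using ij by blast
      qed
      have "cops_force E [f (i + 1)] r'" if R: "robber_reach E (set [f (i + 1)]) (f t) r'" for r'
      proof -
        obtain t' where "i + 1 < t'" "t' < N" "r' = f t'" using inv[OF R] by blast
        then show ?thesis using less.hyps[of "i+1" t'] less.prems by auto
      qed
      then show ?thesis by blast
    qed
  qed
qed

lemma path_c_inf:
  assumes "is_path_graph V E" "finite V" "V \<noteq> {}"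
  shows "c_inf V E \<le> 1"
proof -
  let ?N = "card V"
  obtain f where bij: "bij_betw f {0..<?N} V"
    and Ech: "\<forall>x y. E x y \<longleftrightarrow> (\<exists>i<?N. \<exists>j<?N. x = f i \<and> y = f j \<and> (i + 1 = j \<or> j + 1 = i))"
    using assms(1) unfolding is_path_graph_def by blast
  have N: "?N > 0" using assms by (simp add: card_gt_0_iff)
  have "cops_win V E 1" unfolding cops_win_def
  proof (intro exI[of _ "[f 0]"] conjI ballI)
    show "set [f 0] \<subseteq> V" using bij N by (auto simp: bij_betw_def)
    fix r assume "r \<in> V"
    then obtain t where t: "t < ?N" "r = f t" using bij unfolding bij_betw_def by (metis atLeastLessThan_iff imageE)
    show "cops_force E [f 0] r"
    proof (cases "t = 0")
      case True
      show ?thesis by (rule cops_force.intros[of E "[f 0]" "[f 0]"]) (auto simp: cop_step_def True t)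
    next
      case False then show ?thesis using path_chase[OF bij Ech, of 0 t] t by auto
    qed
  qed simp
  then show ?thesis by (rule c_inf_le)
qed

lemma cycle_chase:
  fixes N :: nat assumes bij: "bij_betw f {0..<N} V"
    and Ech: "\<forall>x y. E x y \<longleftrightarrow> (\<exists>i<N. \<exists>j<N. x = f i \<and> y = f j \<and>
        (j = (i + 1) mod N \<or> i = (j + 1) mod N))"
  shows "i < t \<Longrightarrow> t < N \<Longrightarrow> cops_force E [f 0, f i] (f t)"
proof (induction "N - i" arbitrary: i t rule: less_induct)
  case less
  have inj: "\<And>a b. a < N \<Longrightarrow> b < N \<Longrightarrow> f a = f b \<Longrightarrow> a = b"
    using bij unfolding bij_betw_def inj_on_def by auto
  have "E (f i) (f (i+1))" using Ech less.prems
    unfolding Ech[rule_format] using less.prems by (intro exI[of _ i] conjI exI[of _ "i+1"]) auto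
  then have step: "cop_step E [f 0, f i] [f 0, f (i+1)]"
    unfolding cop_step_def by (auto simp: nth_Cons split: nat.splits)
  show ?case
  proof (rule cops_force.intros[OF step])
    show "f t \<in> set [f 0, f (i + 1)] \<or> (\<forall>r'. robber_reach E (set [f 0, f (i + 1)]) (f t) r' \<longrightarrow> cops_force E [f 0, f (i + 1)] r')"
    proof (cases "t = i + 1")
      case True then show ?thesis by simp
    next
      case False
      have inv: "\<exists>t'. i + 1 < t' \<and> t' < N \<and> r' = f t'" if "robber_reach E (set [f 0, f (i + 1)]) (f t) r'" for r'
        using that unfolding robber_reach_def
      proof (induction rule: rtranclp_induct)
        case base have "i + 1 < t" using False less.prems by auto
        then show ?case using less.prems by blast
      next
        case (step a b)
        obtain ta where ta: "i + 1 < ta" "ta < N" "a = f ta" using step.IH by blast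
        have "E a b" "b \<noteq> f (i+1)" "b \<noteq> f 0" using step.hyps by auto
        then obtain i1 j1 where ij: "i1 < N" "j1 < N" "a = f i1" "b = f j1"
            "j1 = (i1 + 1) mod N \<or> i1 = (j1 + 1) mod N"
          by (auto simp: Ech)
        have "i1 = ta" using inj ij ta by blast
        moreover have "j1 \<noteq> i + 1" using ij \<open>b \<noteq> f (i+1)\<close> by auto
        moreover have "j1 \<noteq> 0" using ij(4) \<open>b \<noteq> f 0\<close> by (metis)
        ultimately have "i + 1 < j1" using ij(1,2,5) ta(1,2)
          by (auto simp: mod_if split: if_splits)
        then show ?case using ij by blast
      qed
      have "cops_force E [f 0, f (i + 1)] r'" if R: "robber_reach E (set [f 0, f (i + 1)]) (f t) r'" for r'
      proof -
        obtain t' where "i + 1 < t'" "t' < N" "r' = f t'" using inv[OF R] by blast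
        then show ?thesis using less.hyps[of "i+1" t'] less.prems by auto
      qed
      then show ?thesis by blast
    qed
  qed
qed

lemma cycle_c_inf:
  assumes "is_cycle_graph V E" "finite V"
  shows "c_inf V E \<le> 2"
proof -
  let ?N = "card V"
  obtain f where bij: "bij_betw f {0..<?N} V"
    and Ech: "\<forall>x y. E x y \<longleftrightarrow> (\<exists>i<?N. \<exists>j<?N. x = f i \<and> y = f j \<and>
        (j = (i + 1) mod ?N \<or> i = (j + 1) mod ?N))"
    using assms(1) unfolding is_cycle_graph_def by blast
  have N: "?N \<ge> 3" using assms unfolding is_cycle_graph_def by simp
  have "cops_win V E 2" unfolding cops_win_def
  proof (intro exI[of _ "[f 0, f 0]"] conjI ballI)
    show "set [f 0, f 0] \<subseteq> V" using bij N by (auto simp: bij_betw_def)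
    fix r assume "r \<in> V"
    then obtain t where t: "t < ?N" "r = f t" using bij unfolding bij_betw_def by (metis atLeastLessThan_iff imageE)
    show "cops_force E [f 0, f 0] r"
    proof (cases "t = 0")
      case True
      show ?thesis by (rule cops_force.intros[of E "[f 0, f 0]" "[f 0, f 0]"])
        (auto simp: cop_step_def True t)
    next
      case False then show ?thesis using cycle_chase[OF bij Ech, of 0 t] t by auto
    qed
  qed simp
  then show ?thesis by (rule c_inf_le)
qed



lemma bij_snoc:
  "bij_betw (\<lambda>(w,c). w @ [c]) (prod_V m V \<times> V m) (prod_V (Suc m) V)"
proof -
  have "inj_on (\<lambda>(w,c). w @ [c]) (prod_V m V \<times> V m)" by (rule inj_onI) auto
  moreover have "(\<lambda>(w,c). w @ [c]) ` (prod_V m V \<times> V m) = prod_V (Suc m) V"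
  proof
    show "(\<lambda>(w,c). w @ [c]) ` (prod_V m V \<times> V m) \<subseteq> prod_V (Suc m) V"
      unfolding prod_V_def by (auto simp: nth_append less_Suc_eq)
    show "prod_V (Suc m) V \<subseteq> (\<lambda>(w,c). w @ [c]) ` (prod_V m V \<times> V m)"
    proof
      fix x assume x: "x \<in> prod_V (Suc m) V"
      then have l: "length x = Suc m" by (simp add: prod_V_def)
      then obtain w c where wc: "x = w @ [c]" by (metis append_butlast_last_id length_0_conv nat.distinct(1))
      have "length w = m" using l wc by simp
      have xi: "\<And>i. i < Suc m \<Longrightarrow> x!i \<in> V i" using x by (simp add: prod_V_def)
      have "w \<in> prod_V m V" unfolding prod_V_def
      proof (simp add: \<open>length w = m\<close>, intro allI impI)
        fix i assume "i < m" then show "w!i \<in> V i" using xi[of i] wc \<open>length w = m\<close> by (simp add: nth_append)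
      qed
      moreover have "c \<in> V m" using xi[of m] wc \<open>length w = m\<close> by (metis lessI nth_append_length)
      ultimately show "x \<in> (\<lambda>(w,c). w @ [c]) ` (prod_V m V \<times> V m)" using wc
        by (intro image_eqI[of _ _ "(w,c)"]) auto
    qed
  qed
  ultimately show ?thesis unfolding bij_betw_def by blast
qed

lemma sum_snoc: "(\<Sum>x\<in>prod_V (Suc m) V. F x) = (\<Sum>w\<in>prod_V m V. \<Sum>c\<in>V m. F (w @ [c]))"
proof -
  have "(\<Sum>x\<in>prod_V (Suc m) V. F x) = (\<Sum>x\<in>prod_V m V \<times> V m. F ((\<lambda>(w,c). w @ [c]) x))"
    using sum.reindex_bij_betw[OF bij_snoc[of m V], of F] by simp
  also have "\<dots> = (\<Sum>w\<in>prod_V m V. \<Sum>c\<in>V m. F (w @ [c]))"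
    by (simp add: sum.cartesian_product split_def)
  finally show ?thesis .
qed

lemma card_snoc: "card (prod_V (Suc m) V) = card (prod_V m V) * card (V m)"
  using bij_betw_same_card[OF bij_snoc[of m V]] by (simp add: card_cartesian_product)

definition Nsum :: "nat \<Rightarrow> (nat \<Rightarrow> 'a set) \<Rightarrow> ('a list \<Rightarrow> real) \<Rightarrow> nat \<Rightarrow> real" where
  "Nsum m V s i = (\<Sum>u\<in>prod_V m V. \<Sum>c\<in>V i. s u * (1 - s (u[i:=c])))"

lemma Nsum_snoc_lt:
  assumes "i < m"
  shows "Nsum (Suc m) V s i = (\<Sum>c\<in>V m. Nsum m V (\<lambda>w. s (w @ [c])) i)"
proof -
  have "Nsum (Suc m) V s i = (\<Sum>w\<in>prod_V m V. \<Sum>c\<in>V m. \<Sum>c'\<in>V i. s (w@[c]) * (1 - s ((w@[c])[i:=c'])))"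
    unfolding Nsum_def by (rule sum_snoc)
  also have "\<dots> = (\<Sum>w\<in>prod_V m V. \<Sum>c\<in>V m. \<Sum>c'\<in>V i. s (w@[c]) * (1 - s (w[i:=c'] @ [c])))"
    by (intro sum.cong refl) (use assms prod_V_length in \<open>auto simp: list_update_append\<close>)
  also have "\<dots> = (\<Sum>c\<in>V m. Nsum m V (\<lambda>w. s (w @ [c])) i)"
    unfolding Nsum_def by (rule sum.swap)
  finally show ?thesis .
qed

lemma Nsum_snoc_eq:
  "Nsum (Suc m) V s m = (\<Sum>w\<in>prod_V m V. \<Sum>c\<in>V m. \<Sum>c'\<in>V m. s (w@[c]) * (1 - s (w@[c'])))"
proof -
  have "Nsum (Suc m) V s m = (\<Sum>w\<in>prod_V m V. \<Sum>c\<in>V m. \<Sum>c'\<in>V m. s (w@[c]) * (1 - s ((w@[c])[m:=c'])))"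
    unfolding Nsum_def by (rule sum_snoc)
  also have "\<dots> = (\<Sum>w\<in>prod_V m V. \<Sum>c\<in>V m. \<Sum>c'\<in>V m. s (w@[c]) * (1 - s (w@[c'])))"
    by (intro sum.cong refl) (metis prod_V_length list_update_length)
  finally show ?thesis .
qed

lemma pw01:
  fixes a b c :: real
  assumes "a = 0 \<or> a = 1" "b = 0 \<or> b = 1" "c = 0 \<or> c = 1"
  shows "a * (1 - b) \<le> a * (1 - c) + c * (1 - b)"
  using assms by (elim disjE) simp_all



lemma comb_ineq:
  assumes "\<forall>i<m. finite (V i) \<and> V i \<noteq> {}" "\<forall>x. s x = 0 \<or> s x = 1"
  shows "(\<Sum>x\<in>prod_V m V. s x) * (\<Sum>y\<in>prod_V m V. 1 - s y)
     \<le> (\<Sum>i<m. real (card (prod_V m V)) / real (card (V i)) * Nsum m V s i)"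
  using assms
proof (induction m arbitrary: s)
  case 0
  have "prod_V 0 V = {[]}" unfolding prod_V_def by auto
  moreover have "s [] = 0 \<or> s [] = 1" using "0.prems" by blast
  ultimately show ?case by (elim disjE) simp_all
next
  case (Suc m)
  let ?P = "prod_V m V" and ?C = "V m"
  let ?p = "real (card ?P)" and ?q = "real (card ?C)"
  have fin: "finite ?P" using finite_prod_V[of m V] Suc.prems by auto
  have finC: "finite ?C" "?C \<noteq> {}" using Suc.prems by auto
  have q0: "?q > 0" using finC by (simp add: card_gt_0_iff)
  define T1 where "T1 = (\<Sum>c\<in>?C. \<Sum>w\<in>?P. \<Sum>w'\<in>?P. s (w@[c]) * (1 - s (w'@[c])))"
  define T2 where "T2 = (\<Sum>w'\<in>?P. \<Sum>c\<in>?C. \<Sum>c'\<in>?C. s (w'@[c]) * (1 - s (w'@[c'])))"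
  have LHS: "(\<Sum>x\<in>prod_V (Suc m) V. s x) * (\<Sum>y\<in>prod_V (Suc m) V. 1 - s y)
      = (\<Sum>w\<in>?P. \<Sum>w'\<in>?P. \<Sum>c\<in>?C. \<Sum>c'\<in>?C. s (w@[c]) * (1 - s (w'@[c'])))"
    unfolding sum_snoc by (simp add: sum_product)
  also have "\<dots> \<le> (\<Sum>w\<in>?P. \<Sum>w'\<in>?P. \<Sum>c\<in>?C. \<Sum>c'\<in>?C.
       (s (w@[c]) * (1 - s (w'@[c])) + s (w'@[c]) * (1 - s (w'@[c']))))"
    by (intro sum_mono pw01; use Suc.prems(2) in blast)
  also have "\<dots> = (\<Sum>w\<in>?P. \<Sum>w'\<in>?P. \<Sum>c\<in>?C. \<Sum>c'\<in>?C. s (w@[c]) * (1 - s (w'@[c])))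
      + (\<Sum>w\<in>?P. \<Sum>w'\<in>?P. \<Sum>c\<in>?C. \<Sum>c'\<in>?C. s (w'@[c]) * (1 - s (w'@[c'])))"
    by (simp add: sum.distrib)
  also have "(\<Sum>w\<in>?P. \<Sum>w'\<in>?P. \<Sum>c\<in>?C. \<Sum>c'\<in>?C. s (w@[c]) * (1 - s (w'@[c]))) = ?q * T1"
  proof -
    have "(\<Sum>w\<in>?P. \<Sum>w'\<in>?P. \<Sum>c\<in>?C. \<Sum>c'\<in>?C. s (w@[c]) * (1 - s (w'@[c])))
       = (\<Sum>w\<in>?P. \<Sum>w'\<in>?P. \<Sum>c\<in>?C. ?q * (s (w@[c]) * (1 - s (w'@[c]))))" by simp
    also have "\<dots> = (\<Sum>w\<in>?P. \<Sum>c\<in>?C. \<Sum>w'\<in>?P. ?q * (s (w@[c]) * (1 - s (w'@[c]))))"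
      by (intro sum.cong refl) (rule sum.swap)
    also have "\<dots> = (\<Sum>c\<in>?C. \<Sum>w\<in>?P. \<Sum>w'\<in>?P. ?q * (s (w@[c]) * (1 - s (w'@[c]))))"
      by (rule sum.swap)
    also have "\<dots> = ?q * T1" unfolding T1_def by (simp add: sum_distrib_left)
    finally show ?thesis .
  qed
  also have "(\<Sum>w\<in>?P. \<Sum>w'\<in>?P. \<Sum>c\<in>?C. \<Sum>c'\<in>?C. s (w'@[c]) * (1 - s (w'@[c']))) = ?p * T2"
    unfolding T2_def by simp
  finally have L: "(\<Sum>x\<in>prod_V (Suc m) V. s x) * (\<Sum>y\<in>prod_V (Suc m) V. 1 - s y) \<le> ?q * T1 + ?p * T2" .
  have IH: "(\<Sum>w\<in>?P. \<Sum>w'\<in>?P. s (w@[c]) * (1 - s (w'@[c])))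
      \<le> (\<Sum>i<m. ?p / real (card (V i)) * Nsum m V (\<lambda>w. s (w@[c])) i)" for c
    using Suc.IH[of "\<lambda>w. s (w@[c])"] Suc.prems unfolding sum_product by auto
  have "?q * T1 \<le> ?q * (\<Sum>c\<in>?C. \<Sum>i<m. ?p / real (card (V i)) * Nsum m V (\<lambda>w. s (w@[c])) i)"
    unfolding T1_def using q0 by (intro mult_left_mono sum_mono IH) auto
  also have "\<dots> = (\<Sum>i<m. real (card (prod_V (Suc m) V)) / real (card (V i)) * Nsum (Suc m) V s i)"
  proof -
    have "?q * (\<Sum>c\<in>?C. \<Sum>i<m. ?p / real (card (V i)) * Nsum m V (\<lambda>w. s (w@[c])) i)
        = (\<Sum>i<m. ?q * (?p / real (card (V i))) * (\<Sum>c\<in>?C. Nsum m V (\<lambda>w. s (w@[c])) i))"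
      by (subst sum.swap) (simp add: sum_distrib_left mult.assoc)
    also have "\<dots> = (\<Sum>i<m. real (card (prod_V (Suc m) V)) / real (card (V i)) * Nsum (Suc m) V s i)"
      by (intro sum.cong refl) (simp add: Nsum_snoc_lt card_snoc)
    finally show ?thesis .
  qed
  finally have A: "?q * T1 \<le> (\<Sum>i<m. real (card (prod_V (Suc m) V)) / real (card (V i)) * Nsum (Suc m) V s i)" .
  have B: "?p * T2 = real (card (prod_V (Suc m) V)) / real (card (V m)) * Nsum (Suc m) V s m"
    unfolding T2_def Nsum_snoc_eq card_snoc using q0 by simp
  show ?case using L A B by simp
qed



section \<open>Edge isoperimetry of products\<close>

lemma sum_indicator_card:
  "finite A \<Longrightarrow> (\<Sum>c\<in>A. (if P c then 1 else 0 :: real)) = real (card {c\<in>A. P c})"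
  by (simp add: sum.inter_filter[symmetric])

lemma card_edge_boundary_sum:
  assumes "finite V" "finite A"
  shows "card (edge_boundary V E A) = (\<Sum>x\<in>A. card {y \<in> V - A. E x y})"
proof -
  have "edge_boundary V E A = Sigma A (\<lambda>x. {y \<in> V - A. E x y})"
    unfolding edge_boundary_def by auto
  then show ?thesis using assms by (simp add: card_SigmaI)
qed

lemma dir_count:
  assumes fin: "\<forall>i<m. finite (V i)" and sg: "\<forall>i<m. simple_graph (V i) (E i)"
    and x: "x \<in> prod_V m V"
  shows "(\<Sum>i<m. card {c \<in> V i. E i (x!i) c \<and> x[i:=c] \<notin> S})
       \<le> card {y \<in> prod_V m V - S. prod_E m V E x y}"
proof -
  let ?C = "\<lambda>i. {c \<in> V i. E i (x!i) c \<and> x[i:=c] \<notin> S}"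
  let ?A = "\<lambda>i. (\<lambda>c. x[i:=c]) ` ?C i"
  have lx: "length x = m" using x prod_V_length by blast
  have finP: "finite (prod_V m V)" using finite_prod_V fin by blast
  have sub: "(\<Union>i<m. ?A i) \<subseteq> {y \<in> prod_V m V - S. prod_E m V E x y}"
  proof (rule subsetI)
    fix y assume "y \<in> (\<Union>i<m. ?A i)"
    then obtain i c where i: "i < m" and c: "c \<in> V i" "E i (x!i) c" "x[i:=c] \<notin> S" and y: "y = x[i:=c]"
      by blast
    have "prod_E m V E (x[i:=x!i]) (x[i:=c])" using prod_E_update[of x m V i E "x!i" c, OF x i c(2)] sg i by blast
    then show "y \<in> {y \<in> prod_V m V - S. prod_E m V E x y}"
      using prod_V_update[OF x i c(1)] c y by simp
  qed
  have inj: "inj_on (\<lambda>c. x[i:=c]) (?C i)" if "i < m" for i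
    by (rule inj_onI) (metis lx nth_list_update_eq that)
  have disj: "?A i \<inter> ?A j = {}" if "i < m" "j < m" "i \<noteq> j" for i j
  proof (rule ccontr)
    assume "?A i \<inter> ?A j \<noteq> {}"
    then obtain c d where cd: "c \<in> ?C i" "d \<in> ?C j" "x[i:=c] = x[j:=d]" by blast
    have "c \<noteq> x!i" using cd(1) simple_graphD(4)[of "V i" "E i" "x!i" c] sg that by auto
    moreover have "x[j:=d] ! i = x!i" using that by simp
    moreover have "x[i:=c] ! i = c" using that lx by simp
    ultimately show False using cd(3) by simp
  qed
  have "(\<Sum>i<m. card (?C i)) = (\<Sum>i<m. card (?A i))"
    by (intro sum.cong refl) (simp add: card_image inj)
  also have "\<dots> = card (\<Union>i<m. ?A i)"
    by (rule card_UN_disjoint[symmetric]) (use fin disj in auto)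
  also have "\<dots> \<le> card {y \<in> prod_V m V - S. prod_E m V E x y}"
    by (rule card_mono) (use finP sub in auto)
  finally show ?thesis .
qed

lemma dir_B:
  assumes i: "i < m" and d0: "d0 \<in> V i" and fin: "finite (V i)"
  shows "(\<Sum>x\<in>prod_V m V. (if x \<in> S then 1 else 0) * real (card {c \<in> V i. E i (x!i) c \<and> x[i:=c] \<notin> S}))
    = (\<Sum>w\<in>{u \<in> prod_V m V. u ! i = d0}. real (card (edge_boundary (V i) (E i) {c \<in> V i. w[i:=c] \<in> S})))"
proof -
  let ?Q = "{u \<in> prod_V m V. u ! i = d0}"
  have "(\<Sum>x\<in>prod_V m V. (if x \<in> S then 1 else 0) * real (card {c \<in> V i. E i (x!i) c \<and> x[i:=c] \<notin> S}))
     = (\<Sum>w\<in>?Q. \<Sum>c\<in>V i. (if w[i:=c] \<in> S then 1 else 0) * real (card {c' \<in> V i. E i (w[i:=c]!i) c' \<and> (w[i:=c])[i:=c'] \<notin> S}))"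
    by (rule sum_slice[of i m d0 V, OF i d0])
  also have "\<dots> = (\<Sum>w\<in>?Q. \<Sum>c\<in>V i. (if c \<in> {c \<in> V i. w[i:=c] \<in> S} then real (card {c' \<in> V i - {c \<in> V i. w[i:=c] \<in> S}. E i c c'}) else 0))"
  proof (intro sum.cong refl)
    fix w c assume w: "w \<in> ?Q" and c: "c \<in> V i"
    have l: "length w = m" using w prod_V_length by blast
    have "{c' \<in> V i. E i (w[i:=c]!i) c' \<and> (w[i:=c])[i:=c'] \<notin> S} = {c' \<in> V i - {c \<in> V i. w[i:=c] \<in> S}. E i c c'}"
      using l i by auto
    then show "(if w[i:=c] \<in> S then 1 else 0) * real (card {c' \<in> V i. E i (w[i:=c]!i) c' \<and> (w[i:=c])[i:=c'] \<notin> S})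
      = (if c \<in> {c \<in> V i. w[i:=c] \<in> S} then real (card {c' \<in> V i - {c \<in> V i. w[i:=c] \<in> S}. E i c c'}) else 0)"
      using c by simp
  qed
  also have "\<dots> = (\<Sum>w\<in>?Q. real (card (edge_boundary (V i) (E i) {c \<in> V i. w[i:=c] \<in> S})))"
  proof (intro sum.cong refl)
    fix w
    let ?A = "{c \<in> V i. w[i:=c] \<in> S}"
    have "(\<Sum>c\<in>V i. (if c \<in> ?A then real (card {c' \<in> V i - ?A. E i c c'}) else 0))
       = (\<Sum>c\<in>?A. real (card {c' \<in> V i - ?A. E i c c'}))"
      using fin by (simp add: sum.inter_filter[symmetric])
    also have "\<dots> = real (card (edge_boundary (V i) (E i) ?A))"
      using card_edge_boundary_sum[of "V i" ?A "E i"] fin by simp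
    finally show "(\<Sum>c\<in>V i. (if c \<in> ?A then real (card {c' \<in> V i - ?A. E i c c'}) else 0))
       = real (card (edge_boundary (V i) (E i) ?A))" .
  qed
  finally show ?thesis .
qed

lemma dir_N:
  assumes i: "i < m" and d0: "d0 \<in> V i" and fin: "finite (V i)"
  shows "Nsum m V (\<lambda>u. if u \<in> S then 1 else 0) i
    = (\<Sum>w\<in>{u \<in> prod_V m V. u ! i = d0}. real (card {c \<in> V i. w[i:=c] \<in> S}) * real (card (V i - {c \<in> V i. w[i:=c] \<in> S})))"
proof -
  let ?Q = "{u \<in> prod_V m V. u ! i = d0}"
  let ?s = "\<lambda>u. if u \<in> S then 1 else 0 :: real"
  have "Nsum m V ?s i = (\<Sum>w\<in>?Q. \<Sum>c\<in>V i. \<Sum>c'\<in>V i. ?s (w[i:=c]) * (1 - ?s ((w[i:=c])[i:=c'])))"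
    unfolding Nsum_def by (rule sum_slice[of i m d0 V, OF i d0])
  also have "\<dots> = (\<Sum>w\<in>?Q. (\<Sum>c\<in>V i. ?s (w[i:=c])) * (\<Sum>c'\<in>V i. 1 - ?s (w[i:=c'])))"
    by (simp only: sum_product list_update_overwrite)
  also have "\<dots> = (\<Sum>w\<in>?Q. real (card {c \<in> V i. w[i:=c] \<in> S}) * real (card (V i - {c \<in> V i. w[i:=c] \<in> S})))"
  proof (intro sum.cong refl)
    fix w
    have 1: "(\<Sum>c\<in>V i. ?s (w[i:=c])) = real (card {c \<in> V i. w[i:=c] \<in> S})"
      using sum_indicator_card[OF fin, of "\<lambda>c. w[i:=c] \<in> S"] by simp
    have "(\<Sum>c'\<in>V i. 1 - ?s (w[i:=c'])) = (\<Sum>c'\<in>V i. (if w[i:=c'] \<notin> S then 1 else 0))"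
      by (intro sum.cong) auto
    also have "\<dots> = real (card {c \<in> V i. w[i:=c] \<notin> S})"
      using sum_indicator_card[OF fin, of "\<lambda>c. w[i:=c] \<notin> S"] by simp
    finally have 2: "(\<Sum>c'\<in>V i. 1 - ?s (w[i:=c'])) = real (card {c \<in> V i. w[i:=c] \<notin> S})" .
    moreover have "{c \<in> V i. w[i:=c] \<notin> S} = V i - {c \<in> V i. w[i:=c] \<in> S}" by auto
    ultimately show "(\<Sum>c\<in>V i. ?s (w[i:=c])) * (\<Sum>c'\<in>V i. 1 - ?s (w[i:=c']))
      = real (card {c \<in> V i. w[i:=c] \<in> S}) * real (card (V i - {c \<in> V i. w[i:=c] \<in> S}))"
      using 1 2 by simp
  qed
  finally show ?thesis .
qed

lemma prod_iso:
  assumes fin: "\<forall>i<m. finite (V i) \<and> V i \<noteq> {}" and sg: "\<forall>i<m. simple_graph (V i) (E i)"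
    and g0: "\<gamma> \<ge> 0"
    and fac: "\<forall>i<m. \<forall>A\<subseteq>V i. \<gamma> * real (card A) * real (card (V i - A)) / real (card (V i))
                  \<le> real (card (edge_boundary (V i) (E i) A))"
    and S: "S \<subseteq> prod_V m V"
  shows "\<gamma> * real (card S) * real (card (prod_V m V - S)) / real (card (prod_V m V))
     \<le> real (card (edge_boundary (prod_V m V) (prod_E m V E) S))"
proof -
  let ?P = "prod_V m V"
  let ?s = "\<lambda>u. if u \<in> S then 1 else 0 :: real"
  let ?Ci = "\<lambda>i x. card {c \<in> V i. E i (x!i) c \<and> x[i:=c] \<notin> S}"
  let ?B = "\<lambda>i. (\<Sum>x\<in>?P. ?s x * real (?Ci i x))"
  have fin': "\<forall>i<m. finite (V i)" using fin by blast
  have finP: "finite ?P" using finite_prod_V[of m V] fin by blast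
  have finS: "finite S" using finite_subset[OF S finP] .
  have s1: "(\<Sum>x\<in>?P. ?s x) = real (card S)"
  proof -
    have "{x \<in> ?P. x \<in> S} = S" using S by auto
    then show ?thesis using sum_indicator_card[OF finP, of "\<lambda>x. x \<in> S"] by simp
  qed
  have s2: "(\<Sum>x\<in>?P. 1 - ?s x) = real (card (?P - S))"
  proof -
    have "(\<Sum>x\<in>?P. 1 - ?s x) = (\<Sum>x\<in>?P. if x \<notin> S then 1 else 0)" by (intro sum.cong) auto
    also have "\<dots> = real (card {x \<in> ?P. x \<notin> S})" using sum_indicator_card[OF finP, of "\<lambda>x. x \<notin> S"] by simp
    also have "{x \<in> ?P. x \<notin> S} = ?P - S" by auto
    finally show ?thesis .
  qed
  have comb: "real (card S) * real (card (?P - S)) \<le> (\<Sum>i<m. real (card ?P) / real (card (V i)) * Nsum m V ?s i)"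
    using comb_ineq[of m V ?s] fin s1 s2 by simp
  have dirs: "\<gamma> / real (card (V i)) * Nsum m V ?s i \<le> ?B i" if i: "i < m" for i
  proof -
    obtain d0 where d0: "d0 \<in> V i" using fin i by blast
    have fVi: "finite (V i)" using fin i by blast
    let ?Q = "{u \<in> ?P. u ! i = d0}"
    have "\<gamma> / real (card (V i)) * Nsum m V ?s i
       = (\<Sum>w\<in>?Q. \<gamma> * real (card {c \<in> V i. w[i:=c] \<in> S}) * real (card (V i - {c \<in> V i. w[i:=c] \<in> S})) / real (card (V i)))"
      unfolding dir_N[of i m d0 V S, OF i d0 fVi] sum_distrib_left by (intro sum.cong refl) simp
    also have "\<dots> \<le> (\<Sum>w\<in>?Q. real (card (edge_boundary (V i) (E i) {c \<in> V i. w[i:=c] \<in> S})))"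
    proof (intro sum_mono)
      fix w
      have "{c \<in> V i. w[i:=c] \<in> S} \<subseteq> V i" by blast
      from fac[rule_format, OF i this]
      show "\<gamma> * real (card {c \<in> V i. w[i:=c] \<in> S}) * real (card (V i - {c \<in> V i. w[i:=c] \<in> S})) / real (card (V i))
        \<le> real (card (edge_boundary (V i) (E i) {c \<in> V i. w[i:=c] \<in> S}))" .
    qed
    also have "\<dots> = ?B i" using dir_B[of i m d0 V S E, OF i d0 fVi] by simp
    finally show ?thesis .
  qed
  have Bsum: "(\<Sum>i<m. ?B i) \<le> real (card (edge_boundary ?P (prod_E m V E) S))"
  proof -
    have "(\<Sum>i<m. ?B i) = (\<Sum>x\<in>?P. \<Sum>i<m. ?s x * real (?Ci i x))" by (rule sum.swap)
    also have "\<dots> = (\<Sum>x\<in>?P. if x \<in> S then (\<Sum>i<m. real (?Ci i x)) else 0)"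
      by (intro sum.cong refl) auto
    also have "\<dots> = (\<Sum>x\<in>S. (\<Sum>i<m. real (?Ci i x)))"
    proof -
      have "{x \<in> ?P. x \<in> S} = S" using S by auto
      then show ?thesis using finP by (simp add: sum.inter_filter[symmetric])
    qed
    also have "\<dots> \<le> (\<Sum>x\<in>S. real (card {y \<in> ?P - S. prod_E m V E x y}))"
    proof (intro sum_mono)
      fix x assume xS: "x \<in> S"
      have "(\<Sum>i<m. ?Ci i x) \<le> card {y \<in> ?P - S. prod_E m V E x y}"
        using dir_count[of m V E x S, OF fin' sg subsetD[OF S xS]] .
      then show "(\<Sum>i<m. real (?Ci i x)) \<le> real (card {y \<in> ?P - S. prod_E m V E x y})"
        by (simp only: of_nat_sum[symmetric] of_nat_le_iff)
    qed
    also have "\<dots> = real (card (edge_boundary ?P (prod_E m V E) S))"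
      using card_edge_boundary_sum[OF finP finS, of "prod_E m V E"] by simp
    finally show ?thesis .
  qed
  show ?thesis
  proof (cases "card ?P = 0")
    case True then show ?thesis by simp
  next
    case False
    then have n0: "real (card ?P) > 0" by simp
    have "\<gamma> * real (card S) * real (card (?P - S)) / real (card ?P)
        \<le> \<gamma> * (\<Sum>i<m. real (card ?P) / real (card (V i)) * Nsum m V ?s i) / real (card ?P)"
      using comb g0 n0 by (simp add: divide_right_mono mult_left_mono mult.assoc)
    also have "\<dots> = (\<Sum>i<m. \<gamma> / real (card (V i)) * Nsum m V ?s i)"
      using n0 by (simp add: sum_distrib_left sum_divide_distrib)
    also have "\<dots> \<le> (\<Sum>i<m. ?B i)" by (intro sum_mono dirs) simp
    also have "\<dots> \<le> real (card (edge_boundary ?P (prod_E m V E) S))" by (rule Bsum)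
    finally show ?thesis .
  qed
qed



section \<open>Robber strategy (lower bound)\<close>

definition avoid :: "('v \<Rightarrow> 'v \<Rightarrow> bool) \<Rightarrow> 'v set \<Rightarrow> 'v \<Rightarrow> 'v \<Rightarrow> bool" where
  "avoid E C = (\<lambda>x y. E x y \<and> x \<notin> C \<and> y \<notin> C)"

definition cls :: "('v \<Rightarrow> 'v \<Rightarrow> bool) \<Rightarrow> 'v set \<Rightarrow> 'v \<Rightarrow> 'v set" where
  "cls E C x = {y. (avoid E C)\<^sup>*\<^sup>* x y}"

definition NB :: "'v set \<Rightarrow> ('v \<Rightarrow> 'v \<Rightarrow> bool) \<Rightarrow> 'v set \<Rightarrow> 'v set" where
  "NB V E C = C \<union> {y \<in> V. \<exists>c\<in>C. E c y}"

lemma cls_self: "x \<in> cls E C x" unfolding cls_def by simp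

lemma cls_sub_V: assumes "simple_graph V E" "x \<in> V" shows "cls E C x \<subseteq> V"
proof
  fix y assume "y \<in> cls E C x"
  then have "(avoid E C)\<^sup>*\<^sup>* x y" by (simp add: cls_def)
  then show "y \<in> V"
    by (induction rule: rtranclp_induct) (use assms simple_graphD in \<open>auto simp: avoid_def\<close>)
qed

lemma cls_avoid: assumes "x \<notin> C" "y \<in> cls E C x" shows "y \<notin> C"
proof -
  have "(avoid E C)\<^sup>*\<^sup>* x y" using assms by (simp add: cls_def)
  then show ?thesis by (induction rule: rtranclp_induct) (use assms in \<open>auto simp: avoid_def\<close>)
qed

lemma cls_mono: assumes "C \<subseteq> C'" shows "cls E C' x \<subseteq> cls E C x"
proof
  fix y assume "y \<in> cls E C' x"
  then have "(avoid E C')\<^sup>*\<^sup>* x y" by (simp add: cls_def)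
  then have "(avoid E C)\<^sup>*\<^sup>* x y"
    by (rule rtranclp_mono[THEN predicate2D, rotated]) (use assms in \<open>auto simp: avoid_def\<close>)
  then show "y \<in> cls E C x" by (simp add: cls_def)
qed

lemma cls_sym: assumes "simple_graph V E" "y \<in> cls E C x" shows "x \<in> cls E C y"
proof -
  have "symp (avoid E C)" unfolding symp_def avoid_def using simple_graphD(3)[OF assms(1)] by blast
  then have "symp (avoid E C)\<^sup>*\<^sup>*" by (rule symp_rtranclp)
  then show ?thesis using assms(2) unfolding cls_def by (simp add: sympD)
qed

lemma cls_eq: assumes "simple_graph V E" "y \<in> cls E C x" shows "cls E C y = cls E C x"
proof -
  have xy: "(avoid E C)\<^sup>*\<^sup>* x y" using assms(2) by (simp add: cls_def)
  have yx: "(avoid E C)\<^sup>*\<^sup>* y x" using cls_sym[OF assms] by (simp add: cls_def)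
  show ?thesis unfolding cls_def using xy yx by (auto intro: rtranclp_trans)
qed

lemma class_sum:
  fixes g :: "'v \<Rightarrow> real"
  assumes fin: "finite W" and sub: "\<And>x. x \<in> W \<Longrightarrow> K x \<subseteq> W"
    and self: "\<And>x. x \<in> W \<Longrightarrow> x \<in> K x"
    and eq: "\<And>x y. x \<in> W \<Longrightarrow> y \<in> K x \<Longrightarrow> K y = K x"
  shows "(\<Sum>x\<in>W. (\<Sum>u\<in>K x. g u) / real (card (K x))) = (\<Sum>u\<in>W. g u)"
proof -
  have mem: "u \<in> K x \<longleftrightarrow> x \<in> K u" if "x \<in> W" "u \<in> W" for x u
    using eq self that by metis
  have "(\<Sum>x\<in>W. (\<Sum>u\<in>K x. g u) / real (card (K x)))
      = (\<Sum>x\<in>W. \<Sum>u\<in>W. (if u \<in> K x then g u / real (card (K u)) else 0))"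
  proof (intro sum.cong refl)
    fix x assume x: "x \<in> W"
    have "(\<Sum>u\<in>K x. g u) / real (card (K x)) = (\<Sum>u\<in>K x. g u / real (card (K u)))"
      using eq[OF x] by (simp add: sum_divide_distrib)
    also have "\<dots> = (\<Sum>u\<in>W. (if u \<in> K x then g u / real (card (K u)) else 0))"
      using sum.inter_filter[OF fin, of "\<lambda>u. g u / real (card (K u))" "\<lambda>u. u \<in> K x"] sub[OF x]
      by (simp add: Int_absorb1 Collect_conj_eq)
    finally show "(\<Sum>u\<in>K x. g u) / real (card (K x)) = (\<Sum>u\<in>W. (if u \<in> K x then g u / real (card (K u)) else 0))" .
  qed
  also have "\<dots> = (\<Sum>u\<in>W. \<Sum>x\<in>W. (if u \<in> K x then g u / real (card (K u)) else 0))"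
    by (rule sum.swap)
  also have "\<dots> = (\<Sum>u\<in>W. g u)"
  proof (intro sum.cong refl)
    fix u assume u: "u \<in> W"
    have "(\<Sum>x\<in>W. (if u \<in> K x then g u / real (card (K u)) else 0))
        = (\<Sum>x\<in>W. (if x \<in> K u then g u / real (card (K u)) else 0))"
      using mem u by (intro sum.cong refl) auto
    also have "\<dots> = real (card {x \<in> W. x \<in> K u}) * (g u / real (card (K u)))"
      using fin by (simp add: sum.inter_filter[symmetric])
    also have "{x \<in> W. x \<in> K u} = K u" using sub[OF u] by auto
    also have "real (card (K u)) * (g u / real (card (K u))) = g u"
    proof -
      have "card (K u) > 0" using self[OF u] finite_subset[OF sub[OF u] fin] by (auto simp: card_gt_0_iff)
      then show ?thesis by simp
    qed
    finally show "(\<Sum>x\<in>W. (if u \<in> K x then g u / real (card (K u)) else 0)) = g u" .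
  qed
  finally show ?thesis .
qed

lemma giant:
  assumes sg: "simple_graph V E"
    and deg: "\<forall>v\<in>V. degree V E v \<le> \<Delta>"
    and iso: "\<forall>T\<subseteq>V. \<beta> * real (card T) * real (card (V - T)) / real (card V) \<le> real (card (edge_boundary V E T))"
    and D1: "\<Delta> \<ge> 1" and b0: "\<beta> \<ge> 0" and b2: "\<beta> \<le> 2 * real \<Delta>"
    and k: "4 * real k * (real \<Delta>)^2 < \<beta> * real (card V)"
    and C: "C \<subseteq> V" "card C \<le> k"
  shows "\<exists>x\<in>V - NB V E C. 2 * card (cls E (NB V E C) x) > card V"
proof (rule ccontr)
  assume neg: "\<not> ?thesis"
  let ?D = "NB V E C" and ?W = "V - NB V E C" and ?n = "card V"
  let ?g = "\<lambda>u. real (card {y \<in> ?D. E u y})"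
  have finV: "finite V" using sg by (simp add: simple_graph_def)
  have CD: "C \<subseteq> ?D" unfolding NB_def by blast
  have DV: "?D \<subseteq> V" unfolding NB_def using C by blast
  have finW: "finite ?W" using finV by blast
  have Ksub: "cls E ?D x \<subseteq> ?W" if "x \<in> ?W" for x
  proof
    fix y assume y: "y \<in> cls E ?D x"
    have "y \<in> V" using cls_sub_V[OF sg, of x ?D] that y by blast
    moreover have "y \<notin> ?D" using cls_avoid[of x ?D y E] that y by blast
    ultimately show "y \<in> ?W" by blast
  qed
  have small: "2 * card (cls E ?D x) \<le> ?n" if "x \<in> ?W" for x
  proof -
    have "\<not> (2 * card (cls E ?D x) > ?n)" using neg that by blast
    then show ?thesis by simp
  qed
  have each: "\<beta> / 2 \<le> (\<Sum>u\<in>cls E ?D x. ?g u) / real (card (cls E ?D x))" if x: "x \<in> ?W" for x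
  proof -
    let ?T = "cls E ?D x"
    have TV: "?T \<subseteq> V" using Ksub[OF x] by blast
    have finT: "finite ?T" using finite_subset[OF TV finV] .
    have Tpos: "card ?T > 0" using finT cls_self[of x E ?D] by (auto simp: card_gt_0_iff)
    have bd: "card (edge_boundary V E ?T) = (\<Sum>u\<in>?T. card {y \<in> ?D. E u y})"
    proof -
      have "{y \<in> V - ?T. E u y} = {y \<in> ?D. E u y}" if u: "u \<in> ?T" for u
      proof
        show "{y \<in> V - ?T. E u y} \<subseteq> {y \<in> ?D. E u y}"
        proof clarify
          fix y assume y: "y \<in> V" "y \<notin> ?T" "E u y"
          show "y \<in> ?D"
          proof (rule ccontr)
            assume "y \<notin> ?D"
            moreover have "u \<notin> ?D" using Ksub[OF x] u by blast
            ultimately have "avoid E ?D u y" using y by (simp add: avoid_def)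
            moreover have "(avoid E ?D)\<^sup>*\<^sup>* x u" using u by (simp add: cls_def)
            ultimately have "y \<in> ?T" by (simp add: cls_def)
            then show False using y by blast
          qed
        qed
        show "{y \<in> ?D. E u y} \<subseteq> {y \<in> V - ?T. E u y}"
          using Ksub[OF x] DV by blast
      qed
      then show ?thesis using card_edge_boundary_sum[OF finV finT, of E] by simp
    qed
    have "\<beta> * real (card ?T) * real (card (V - ?T)) / real ?n \<le> real (card (edge_boundary V E ?T))"
      using iso TV by blast
    also have "\<dots> = (\<Sum>u\<in>?T. ?g u)" unfolding bd by (simp only: of_nat_sum)
    finally have "\<beta> * real (card ?T) * real (card (V - ?T)) / real ?n \<le> (\<Sum>u\<in>?T. ?g u)" .
    moreover have "real (card (V - ?T)) \<ge> real ?n / 2"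
      using small[OF x] card_Diff_subset[OF finT TV] card_mono[OF finV TV] by simp
    moreover have "real ?n > 0" using finV TV Tpos card_mono[OF finV TV] by simp
    ultimately have "\<beta> * real (card ?T) / 2 \<le> (\<Sum>u\<in>?T. ?g u)"
    proof -
      assume a: "\<beta> * real (card ?T) * real (card (V - ?T)) / real ?n \<le> (\<Sum>u\<in>?T. ?g u)"
        and b: "real (card (V - ?T)) \<ge> real ?n / 2" and c: "real ?n > 0"
      have "\<beta> * real (card ?T) / 2 = \<beta> * real (card ?T) * (real ?n / 2) / real ?n" using c by simp
      also have "\<dots> \<le> \<beta> * real (card ?T) * real (card (V - ?T)) / real ?n"
        using b c b0 by (intro divide_right_mono mult_left_mono) auto
      finally show ?thesis using a by linarith
    qed
    then show ?thesis using Tpos by (simp add: field_simps)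
  qed
  have "real (card ?W) * (\<beta> / 2) = (\<Sum>x\<in>?W. \<beta> / 2)" by simp
  also have "\<dots> \<le> (\<Sum>x\<in>?W. (\<Sum>u\<in>cls E ?D x. ?g u) / real (card (cls E ?D x)))"
    by (intro sum_mono each)
  also have "\<dots> = (\<Sum>u\<in>?W. ?g u)"
    by (rule class_sum[OF finW Ksub]) (simp_all add: cls_self cls_eq[OF sg])
  finally have L1: "real (card ?W) * (\<beta> / 2) \<le> (\<Sum>u\<in>?W. ?g u)" .
  let ?Nb = "{y \<in> V. \<exists>c\<in>C. E c y}"
  have finC: "finite C" using finite_subset[OF C(1) finV] .
  have Nbcard: "card ?Nb \<le> k * \<Delta>"
  proof -
    have "?Nb = (\<Union>c\<in>C. {y \<in> V. E c y})" by blast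
    then have "card ?Nb \<le> (\<Sum>c\<in>C. card {y \<in> V. E c y})" by (simp add: card_UN_le finC)
    also have "\<dots> \<le> (\<Sum>c\<in>C. \<Delta>)"
      by (intro sum_mono) (use deg C(1) in \<open>auto simp: degree_def\<close>)
    also have "\<dots> \<le> k * \<Delta>" using C(2) by simp
    finally show ?thesis .
  qed
  have DC: "?D - C \<subseteq> ?Nb" unfolding NB_def by blast
  have finD: "finite ?D" using finite_subset[OF DV finV] .
  have L3: "real (card ?W) \<ge> real ?n - real k - real k * real \<Delta>"
  proof -
    have "card ?D = card C + card (?D - C)" using card_Diff_subset[OF finC CD] card_mono[OF finD CD] by simp
    also have "\<dots> \<le> k + k * \<Delta>" using C(2) Nbcard card_mono[OF _ DC] finV by simp
    finally have "card ?D \<le> k + k * \<Delta>" .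
    then have "real (card ?D) \<le> real k + real k * real \<Delta>" by (metis of_nat_add of_nat_le_iff of_nat_mult)
    moreover have "card ?W = ?n - card ?D" using card_Diff_subset[OF finD DV] .
    moreover have "card ?D \<le> ?n" using card_mono[OF finV DV] .
    ultimately show ?thesis by (simp add: of_nat_diff)
  qed
  have L2: "(\<Sum>u\<in>?W. ?g u) \<le> real k * real \<Delta> * (real \<Delta> - 1)"
  proof -
    let ?h = "\<lambda>y. real (card {u \<in> ?W. E u y})"
    have "(\<Sum>u\<in>?W. ?g u) = (\<Sum>u\<in>?W. \<Sum>y\<in>?D. (if E u y then 1 else 0))"
      using sum_indicator_card[OF finD] by simp
    also have "\<dots> = (\<Sum>y\<in>?D. \<Sum>u\<in>?W. (if E u y then 1 else 0))" by (rule sum.swap)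
    also have "\<dots> = (\<Sum>y\<in>?D. ?h y)" using sum_indicator_card[OF finW] by simp
    also have "\<dots> = (\<Sum>y\<in>?D - C. ?h y) + (\<Sum>y\<in>C. ?h y)"
      using sum.subset_diff[OF CD finD] by simp
    also have "(\<Sum>y\<in>C. ?h y) = 0"
    proof (intro sum.neutral ballI)
      fix y assume y: "y \<in> C"
      have "{u \<in> ?W. E u y} = {}"
      proof (rule ccontr)
        assume "{u \<in> ?W. E u y} \<noteq> {}"
        then obtain u where u: "u \<in> ?W" "E u y" by blast
        then have "E y u" "u \<in> V" using simple_graphD[OF sg] by blast+
        then have "u \<in> ?D" using y unfolding NB_def by blast
        then show False using u by blast
      qed
      then show "?h y = 0" by (simp only: card.empty of_nat_0)
    qed
    also have "(\<Sum>y\<in>?D - C. ?h y) \<le> (\<Sum>y\<in>?D - C. real \<Delta> - 1)"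
    proof (intro sum_mono)
      fix y assume y: "y \<in> ?D - C"
      then obtain c where c: "c \<in> C" "E c y" "y \<in> V" unfolding NB_def by blast
      have cV: "c \<in> V" "E y c" using simple_graphD[OF sg c(2)] by blast+
      have sub: "{u \<in> ?W. E u y} \<subseteq> {u \<in> V. E y u} - {c}"
        using CD c(1) simple_graphD(3)[OF sg] by blast
      have fin1: "finite {u \<in> V. E y u}" using finV by simp
      have "card {u \<in> ?W. E u y} \<le> card ({u \<in> V. E y u} - {c})"
        by (rule card_mono) (use fin1 sub in auto)
      also have "\<dots> = card {u \<in> V. E y u} - 1" using cV by simp
      also have "card {u \<in> V. E y u} \<le> \<Delta>" using deg c(3) by (simp add: degree_def)
      finally have "card {u \<in> ?W. E u y} \<le> \<Delta> - 1" by simp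
      then show "?h y \<le> real \<Delta> - 1" using D1 by (simp add: of_nat_diff)
    qed
    also have "\<dots> = real (card (?D - C)) * (real \<Delta> - 1)" by simp
    also have "\<dots> \<le> real (k * \<Delta>) * (real \<Delta> - 1)"
    proof (rule mult_right_mono)
      have "card (?D - C) \<le> k * \<Delta>" using card_mono[OF _ DC] finV Nbcard by simp
      then show "real (card (?D - C)) \<le> real (k * \<Delta>)" by (simp only: of_nat_le_iff)
      show "0 \<le> real \<Delta> - 1" using D1 by simp
    qed
    finally show ?thesis by simp
  qed
  have "\<beta> * (real ?n - real k - real k * real \<Delta>) \<le> 2 * real k * real \<Delta> * (real \<Delta> - 1)"
  proof -
    have a: "\<beta> * (real ?n - real k - real k * real \<Delta>) \<le> \<beta> * real (card ?W)"
      by (rule mult_left_mono[OF L3 b0])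
    have "real (card ?W) * (\<beta> / 2) = \<beta> * real (card ?W) / 2" by simp
    then show ?thesis using a L1 L2 by linarith
  qed
  moreover have "\<beta> * real k * (1 + real \<Delta>) \<le> 2 * real \<Delta> * real k * (1 + real \<Delta>)"
    using b2 by (intro mult_right_mono) auto
  ultimately have "\<beta> * real ?n \<le> 4 * real k * (real \<Delta>)^2"
    by (simp add: algebra_simps power2_eq_square)
  then show False using k by simp
qed



lemma cop_step_sub:
  assumes "cop_step E cs cs'" "simple_graph V E"
  shows "set cs' \<subseteq> NB V E (set cs)"
proof
  fix y assume "y \<in> set cs'"
  then obtain i where i: "i < length cs'" "y = cs' ! i" by (auto simp: in_set_conv_nth)
  have l: "length cs' = length cs" using assms(1) by (simp add: cop_step_def)
  then have "cs' ! i = cs ! i \<or> E (cs ! i) (cs' ! i)" using assms(1) i by (simp add: cop_step_def)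
  moreover have "cs ! i \<in> set cs" using i l by simp
  ultimately show "y \<in> NB V E (set cs)"
  proof (elim disjE)
    assume "cs' ! i = cs ! i" "cs ! i \<in> set cs" then show ?thesis using i unfolding NB_def by simp
  next
    assume e: "E (cs ! i) (cs' ! i)" "cs ! i \<in> set cs"
    then have "cs' ! i \<in> V" using simple_graphD(2)[OF assms(2)] by blast
    then show ?thesis using i e unfolding NB_def by blast
  qed
qed

lemma robber_inv:
  assumes sg: "simple_graph V E"
    and deg: "\<forall>v\<in>V. degree V E v \<le> \<Delta>"
    and iso: "\<forall>T\<subseteq>V. \<beta> * real (card T) * real (card (V - T)) / real (card V) \<le> real (card (edge_boundary V E T))"
    and D1: "\<Delta> \<ge> 1" and b0: "\<beta> \<ge> 0" and b2: "\<beta> \<le> 2 * real \<Delta>"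
    and k: "4 * real k * (real \<Delta>)^2 < \<beta> * real (card V)"
  shows "cops_force E cs r \<Longrightarrow> length cs \<le> k \<longrightarrow> set cs \<subseteq> V \<longrightarrow> r \<in> V - NB V E (set cs)
     \<longrightarrow> 2 * card (cls E (NB V E (set cs)) r) > card V \<longrightarrow> False"
proof (induction rule: cops_force.induct)
  case (1 cs cs' r)
  show ?case
  proof (intro impI)
    assume len: "length cs \<le> k" and CV: "set cs \<subseteq> V" and r: "r \<in> V - NB V E (set cs)"
      and big: "2 * card (cls E (NB V E (set cs)) r) > card V"
    let ?C = "set cs" and ?C' = "set cs'"
    have finV: "finite V" using sg by (simp add: simple_graph_def)
    have sub: "?C' \<subseteq> NB V E ?C" using cop_step_sub[OF 1(1) sg] .
    have NBV: "NB V E ?C \<subseteq> V" using CV unfolding NB_def by blast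
    have C'V: "?C' \<subseteq> V" using sub NBV by blast
    have len': "length cs' = length cs" using 1(1) by (simp add: cop_step_def)
    have cardC': "card ?C' \<le> k" using card_length[of cs'] len len' by simp
    have rC': "r \<notin> ?C'" using r sub by blast
    obtain x' where x': "x' \<in> V - NB V E ?C'" "2 * card (cls E (NB V E ?C') x') > card V"
      using giant[OF sg deg iso D1 b0 b2 k C'V cardC'] by blast
    let ?A = "cls E (NB V E ?C) r" and ?B = "cls E (NB V E ?C') x'"
    have A: "?A \<subseteq> cls E ?C' r" by (rule cls_mono[OF sub])
    have B: "?B \<subseteq> cls E ?C' x'" by (rule cls_mono) (auto simp: NB_def)
    have AV: "?A \<subseteq> V" using cls_sub_V[OF sg] r by blast
    have BV: "?B \<subseteq> V" using cls_sub_V[OF sg] x' by blast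
    have "?A \<inter> ?B \<noteq> {}"
    proof
      assume dis: "?A \<inter> ?B = {}"
      have "card ?A + card ?B = card (?A \<union> ?B)"
        using card_Un_disjoint[OF finite_subset[OF AV finV] finite_subset[OF BV finV] dis] by simp
      also have "\<dots> \<le> card V" using AV BV finV by (intro card_mono) auto
      finally show False using big x'(2) by linarith
    qed
    then obtain z where z: "z \<in> cls E ?C' r" "z \<in> cls E ?C' x'" using A B by blast
    have "cls E ?C' z = cls E ?C' r" "cls E ?C' z = cls E ?C' x'" using cls_eq[OF sg] z by blast+
    then have "x' \<in> cls E ?C' r" using cls_self[of x' E ?C'] by simp
    then have reach: "robber_reach E ?C' r x'"
      unfolding robber_reach_def cls_def avoid_def by simp
    from 1(2) rC' have "\<forall>r'. robber_reach E ?C' r r' \<longrightarrow> cops_force E cs' r' \<and>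
         (length cs' \<le> k \<longrightarrow> ?C' \<subseteq> V \<longrightarrow> r' \<in> V - NB V E ?C' \<longrightarrow> 2 * card (cls E (NB V E ?C') r') > card V \<longrightarrow> False)"
      by blast
    then show False using reach len len' C'V x' by auto
  qed
qed

lemma robber_core:
  assumes sg: "simple_graph V E"
    and deg: "\<forall>v\<in>V. degree V E v \<le> \<Delta>"
    and iso: "\<forall>T\<subseteq>V. \<beta> * real (card T) * real (card (V - T)) / real (card V) \<le> real (card (edge_boundary V E T))"
    and n2: "card V \<ge> 2"
    and k: "4 * real k * (real \<Delta>)^2 < \<beta> * real (card V)"
  shows "\<not> cops_win V E k"
proof
  assume win: "cops_win V E k"
  have finV: "finite V" using sg by (simp add: simple_graph_def)
  have npos: "real (card V) > 0" using n2 by simp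
  have "0 \<le> 4 * real k * (real \<Delta>)^2" by simp
  then have "\<beta> * real (card V) > 0" using k by linarith
  then have bpos: "\<beta> > 0" using npos by (simp add: zero_less_mult_iff)
  obtain v where v: "v \<in> V" using n2 by (metis card.empty ex_in_conv not_numeral_le_zero)
  have "\<beta> * real (card {v}) * real (card (V - {v})) / real (card V) \<le> real (card (edge_boundary V E {v}))"
    using iso v by blast
  moreover have "card (edge_boundary V E {v}) = degree V E v"
  proof -
    have "card (edge_boundary V E {v}) = card {y \<in> V - {v}. E v y}"
      using card_edge_boundary_sum[OF finV, of "{v}" E] by simp
    also have "{y \<in> V - {v}. E v y} = {y \<in> V. E v y}" using simple_graphD(4)[OF sg] by blast
    finally show ?thesis by (simp add: degree_def)
  qed
  moreover have "card (V - {v}) = card V - 1" using v finV by simp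
  ultimately have h: "\<beta> * (real (card V) - 1) / real (card V) \<le> real \<Delta>"
    using deg v n2 by (simp add: of_nat_diff) (smt (verit, best) of_nat_le_iff)
  have "\<beta> / 2 \<le> \<beta> * (real (card V) - 1) / real (card V)"
  proof -
    have "1 / 2 \<le> (real (card V) - 1) / real (card V)" using n2 npos by (simp add: field_simps)
    then have "\<beta> * (1/2) \<le> \<beta> * ((real (card V) - 1) / real (card V))" using bpos by (intro mult_left_mono) auto
    then show ?thesis by simp
  qed
  then have b2: "\<beta> \<le> 2 * real \<Delta>" using h by linarith
  have D1: "\<Delta> \<ge> 1" using b2 bpos by (cases \<Delta>) auto
  from win obtain cs where cs: "length cs = k" "set cs \<subseteq> V" "\<forall>r\<in>V. cops_force E cs r"
    unfolding cops_win_def by blast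
  have "card (set cs) \<le> k" using card_length[of cs] cs(1) by simp
  then obtain r where r: "r \<in> V - NB V E (set cs)" "2 * card (cls E (NB V E (set cs)) r) > card V"
    using giant[OF sg deg iso D1 _ b2 k cs(2)] bpos by auto
  then have "cops_force E cs r" using cs(3) by blast
  then show False using robber_inv[OF sg deg iso D1 _ b2 k] bpos cs r by auto
qed



lemma prod_simple:
  assumes fin: "\<forall>i<m. finite (V i)" and sg: "\<forall>i<m. simple_graph (V i) (E i)"
  shows "simple_graph (prod_V m V) (prod_E m V E)"
proof -
  have f: "finite (prod_V m V)" using finite_prod_V[OF fin] .
  have v: "\<forall>x y. prod_E m V E x y \<longrightarrow> x \<in> prod_V m V \<and> y \<in> prod_V m V" by (simp add: prod_E_def)
  have s: "prod_E m V E y x" if xy: "prod_E m V E x y" for x y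
  proof -
    obtain j where j: "j < m" "E j (x!j) (y!j)" "\<forall>i<m. i \<noteq> j \<longrightarrow> x!i = y!i" "x \<in> prod_V m V" "y \<in> prod_V m V"
      using xy unfolding prod_E_def by blast
    have "simple_graph (V j) (E j)" using sg j(1) by blast
    then have "E j (y!j) (x!j)" using j(2) by (rule simple_graphD(3))
    then show ?thesis unfolding prod_E_def using j by (intro conjI exI[of _ j]) auto
  qed
  have r: "\<not> prod_E m V E x x" for x
  proof
    assume "prod_E m V E x x"
    then obtain j where j: "j < m" "E j (x!j) (x!j)" unfolding prod_E_def by blast
    then show False using simple_graphD(4)[of "V j" "E j" "x!j" "x!j"] sg by simp
  qed
  have s': "\<forall>x y. prod_E m V E x y \<longrightarrow> prod_E m V E y x" using s by blast
  have r': "\<forall>x. \<not> prod_E m V E x x" using r by blast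
  show ?thesis unfolding simple_graph_def using f v s' r' by (intro conjI)
qed

lemma degree_le_max: assumes "finite V" "x \<in> V" shows "degree V E x \<le> max_degree V E"
  unfolding max_degree_def using assms by (intro Max_ge) auto

lemma prod_degree:
  assumes fin: "\<forall>i<m. finite (V i)" and sg: "\<forall>i<m. simple_graph (V i) (E i)"
    and x: "x \<in> prod_V m V"
  shows "degree (prod_V m V) (prod_E m V E) x \<le> (\<Sum>i<m. max_degree (V i) (E i))"
proof -
  have lx: "length x = m" using x prod_V_length by blast
  have sub: "{y \<in> prod_V m V. prod_E m V E x y} \<subseteq> (\<Union>i<m. (\<lambda>c. x[i:=c]) ` {c \<in> V i. E i (x!i) c})"
  proof
    fix y assume "y \<in> {y \<in> prod_V m V. prod_E m V E x y}"
    then obtain j where j: "j < m" "E j (x!j) (y!j)" "\<forall>i<m. i \<noteq> j \<longrightarrow> x!i = y!i" "y \<in> prod_V m V"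
      unfolding prod_E_def by blast
    have ly: "length y = m" using j(4) prod_V_length by blast
    have "y = x[j:=y!j]"
    proof (rule nth_equalityI)
      show "length y = length (x[j:=y!j])" using lx ly by simp
      fix i assume "i < length y"
      then show "y ! i = x[j:=y!j] ! i" using lx ly j(3) by (cases "i = j") auto
    qed
    moreover have "y!j \<in> V j"
    proof -
      have "simple_graph (V j) (E j)" using sg j(1) by blast
      then show ?thesis using j(2) by (rule simple_graphD(2))
    qed
    ultimately show "y \<in> (\<Union>i<m. (\<lambda>c. x[i:=c]) ` {c \<in> V i. E i (x!i) c})" using j by blast
  qed
  have "degree (prod_V m V) (prod_E m V E) x \<le> card (\<Union>i<m. (\<lambda>c. x[i:=c]) ` {c \<in> V i. E i (x!i) c})"
    unfolding degree_def
  proof (rule card_mono[OF _ sub])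
    show "finite (\<Union>i<m. (\<lambda>c. x[i:=c]) ` {c \<in> V i. E i (x!i) c})" using fin by simp
  qed
  also have "\<dots> \<le> (\<Sum>i<m. card ((\<lambda>c. x[i:=c]) ` {c \<in> V i. E i (x!i) c}))" by (rule card_UN_le) simp
  also have "\<dots> \<le> (\<Sum>i<m. max_degree (V i) (E i))"
  proof (intro sum_mono)
    fix i assume "i \<in> {..<m}"
    then have i: "i < m" by simp
    have "card ((\<lambda>c. x[i:=c]) ` {c \<in> V i. E i (x!i) c}) \<le> card {c \<in> V i. E i (x!i) c}"
      by (rule card_image_le) (use fin i in simp)
    also have "\<dots> = degree (V i) (E i) (x!i)" by (simp add: degree_def)
    also have "\<dots> \<le> max_degree (V i) (E i)" by (rule degree_le_max) (use fin i prod_V_nth[OF x i] in auto)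
    finally show "card ((\<lambda>c. x[i:=c]) ` {c \<in> V i. E i (x!i) c}) \<le> max_degree (V i) (E i)" .
  qed
  finally show ?thesis .
qed

lemma prod_card_ge2:
  assumes fin: "\<forall>i<m. finite (V i)" and ne: "\<forall>i<m. 2 \<le> card (V i)" and m: "1 \<le> m"
  shows "2 \<le> card (prod_V m V)"
proof -
  let ?x = "map (\<lambda>i. SOME c. c \<in> V i) [0..<m]"
  have Vne: "V i \<noteq> {}" if "i < m" for i using ne that by fastforce
  have x: "?x \<in> prod_V m V" unfolding prod_V_def using Vne by (simp add: some_in_eq)
  have m0: "0 < m" using m by simp
  obtain d0 where d0: "d0 \<in> V 0" using Vne[OF m0] by blast
  have "?x[0:=d0] \<in> {u \<in> prod_V m V. u ! 0 = d0}" using prod_V_update[OF x m0 d0] m0 by simp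
  moreover have "finite {u \<in> prod_V m V. u ! 0 = d0}" using finite_prod_V[OF fin] by simp
  ultimately have "card {u \<in> prod_V m V. u ! 0 = d0} \<ge> 1" by (metis One_nat_def Suc_leI card_gt_0_iff empty_iff)
  moreover have "card (V 0) \<ge> 2" using ne m0 by blast
  ultimately have "1 * 2 \<le> card {u \<in> prod_V m V. u ! 0 = d0} * card (V 0)" by (rule mult_le_mono)
  then show ?thesis using card_slice[of 0 m d0 V, OF m0 d0] by simp
qed



lemma eb_sym:
  assumes sg: "simple_graph V E" and A: "A \<subseteq> V"
  shows "card (edge_boundary V E (V - A)) = card (edge_boundary V E A)"
proof -
  have "edge_boundary V E (V - A) = prod.swap ` edge_boundary V E A"
  proof
    show "edge_boundary V E (V - A) \<subseteq> prod.swap ` edge_boundary V E A"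
    proof
      fix p assume "p \<in> edge_boundary V E (V - A)"
      then obtain x y where p: "p = (x, y)" "x \<in> V - A" "y \<in> A" "E x y"
        unfolding edge_boundary_def using A by auto
      have "E y x" using simple_graphD(3)[OF sg p(4)] .
      then have "(y, x) \<in> edge_boundary V E A" unfolding edge_boundary_def using p by auto
      then show "p \<in> prod.swap ` edge_boundary V E A" using p by force
    qed
    show "prod.swap ` edge_boundary V E A \<subseteq> edge_boundary V E (V - A)"
    proof
      fix p assume "p \<in> prod.swap ` edge_boundary V E A"
      then obtain x y where p: "p = (y, x)" "x \<in> A" "y \<in> V - A" "E x y"
        unfolding edge_boundary_def by auto
      have "E y x" using simple_graphD(3)[OF sg p(4)] .
      then show "p \<in> edge_boundary V E (V - A)" unfolding edge_boundary_def using p A by auto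
    qed
  qed
  then show ?thesis by (simp add: card_image)
qed

lemma iso_factor:
  assumes sg: "simple_graph V E" and n2: "card V \<ge> 2" and A: "A \<subseteq> V"
  shows "0 \<le> edge_iso V E"
    and "edge_iso V E * real (card A) * real (card (V - A)) / real (card V)
          \<le> real (card (edge_boundary V E A))"
proof -
  let ?F = "{S. S \<subseteq> V \<and> 0 < card S \<and> 2 * card S \<le> card V}"
  let ?r = "\<lambda>S. real (card (edge_boundary V E S)) / real (card S)"
  have finV: "finite V" using sg by (simp add: simple_graph_def)
  have finF: "finite ?F" by (rule finite_subset[of _ "Pow V"]) (use finV in auto)
  obtain v where v: "v \<in> V" using n2 by (metis card.empty ex_in_conv not_numeral_le_zero)
  have "{v} \<in> ?F" using v n2 by auto
  then have neF: "?r ` ?F \<noteq> {}" by blast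
  have iota: "edge_iso V E = Min (?r ` ?F)" by (simp add: edge_iso_def)
  have "Min (?r ` ?F) \<in> ?r ` ?F" using finF neF by (intro Min_in) auto
  then show i0: "0 \<le> edge_iso V E" unfolding iota by auto
  have le: "edge_iso V E * real (card S) \<le> real (card (edge_boundary V E S))" if "S \<in> ?F" for S
  proof -
    have "edge_iso V E \<le> ?r S" unfolding iota using finF that by (intro Min_le) auto
    moreover have "real (card S) > 0" using that by simp
    ultimately show ?thesis by (simp add: field_simps)
  qed
  have finA: "finite A" using finite_subset[OF A finV] .
  have cVA: "card (V - A) = card V - card A" using card_Diff_subset[OF finA A] .
  have cA: "card A \<le> card V" using card_mono[OF finV A] .
  have npos: "real (card V) > 0" using n2 by simp
  show "edge_iso V E * real (card A) * real (card (V - A)) / real (card V)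
          \<le> real (card (edge_boundary V E A))"
  proof (cases "card A = 0 \<or> card A = card V")
    case True
    then show ?thesis by (elim disjE) (simp_all add: cVA)
  next
    case False
    show ?thesis
    proof (cases "2 * card A \<le> card V")
      case True
      then have "A \<in> ?F" using A False by auto
      then have h: "edge_iso V E * real (card A) \<le> real (card (edge_boundary V E A))" by (rule le)
      have "edge_iso V E * real (card A) * real (card (V - A)) / real (card V)
          = edge_iso V E * real (card A) * (real (card (V - A)) / real (card V))" by simp
      also have "\<dots> \<le> edge_iso V E * real (card A) * 1"
      proof (rule mult_left_mono)
        show "real (card (V - A)) / real (card V) \<le> 1" using npos cVA by (simp add: divide_le_eq_1)
        show "0 \<le> edge_iso V E * real (card A)" using i0 by simp
      qed
      finally show ?thesis using h by simp
    next
      case nt: False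
      have "V - A \<in> ?F" using cVA cA False nt by auto
      then have h: "edge_iso V E * real (card (V - A)) \<le> real (card (edge_boundary V E A))"
        using le[OF \<open>V - A \<in> ?F\<close>] eb_sym[OF sg A] by simp
      have "edge_iso V E * real (card A) * real (card (V - A)) / real (card V)
          = edge_iso V E * real (card (V - A)) * (real (card A) / real (card V))" by simp
      also have "\<dots> \<le> edge_iso V E * real (card (V - A)) * 1"
      proof (rule mult_left_mono)
        show "real (card A) / real (card V) \<le> 1" using npos cA by (simp add: divide_le_eq_1)
        show "0 \<le> edge_iso V E * real (card (V - A))" using i0 by simp
      qed
      finally show ?thesis using h by simp
    qed
  qed
qed

lemma reach_cross:
  assumes "E\<^sup>*\<^sup>* a b" "a \<in> A" "b \<notin> A"
  shows "\<exists>x y. x \<in> A \<and> y \<notin> A \<and> E x y"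
  using assms by (induction rule: rtranclp_induct) auto

lemma conn_boundary:
  assumes sg: "simple_graph V E" and conn: "connected_graph V E" and A: "A \<subseteq> V" "A \<noteq> {}" "A \<noteq> V"
  shows "card (edge_boundary V E A) \<ge> 1"
proof -
  have finV: "finite V" using sg by (simp add: simple_graph_def)
  obtain a b where ab: "a \<in> A" "b \<in> V" "b \<notin> A" using A by blast
  have "E\<^sup>*\<^sup>* a b" using conn ab A unfolding connected_graph_def by blast
  then obtain x y where xy: "x \<in> A" "y \<notin> A" "E x y" using reach_cross ab by metis
  have "y \<in> V" using simple_graphD(2)[OF sg xy(3)] .
  then have "(x, y) \<in> edge_boundary V E A" unfolding edge_boundary_def using xy by auto
  moreover have "finite (edge_boundary V E A)"
    by (rule finite_subset[of _ "V \<times> V"]) (use A finV in \<open>auto simp: edge_boundary_def\<close>)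
  ultimately show ?thesis by (metis One_nat_def Suc_leI card_gt_0_iff empty_iff)
qed

lemma amgm: assumes "a \<le> N" shows "real a * real (N - a) \<le> real N * real N / 4"
proof -
  have "real (N - a) = real N - real a" using assms by (simp add: of_nat_diff)
  moreover have "0 \<le> (real N - 2 * real a)^2" by simp
  ultimately show ?thesis by (simp add: power2_eq_square algebra_simps)
qed

lemma small_factor:
  assumes sg: "simple_graph V E" and cV: "card V \<le> n0" and A: "A \<subseteq> V" and c: "c \<ge> 0"
    and bd: "A \<noteq> {} \<Longrightarrow> A \<noteq> V \<Longrightarrow> card (edge_boundary V E A) \<ge> c"
  shows "4 * real c / real n0 * real (card A) * real (card (V - A)) / real (card V)
          \<le> real (card (edge_boundary V E A))"
proof -
  have finV: "finite V" using sg by (simp add: simple_graph_def)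
  have finA: "finite A" using finite_subset[OF A finV] .
  have cVA: "card (V - A) = card V - card A" using card_Diff_subset[OF finA A] .
  have cA: "card A \<le> card V" using card_mono[OF finV A] .
  show ?thesis
  proof (cases "A = {} \<or> A = V")
    case True
    then show ?thesis by (elim disjE) simp_all
  next
    case False
    then have ne: "A \<noteq> {}" "A \<noteq> V" by auto
    then have Vpos: "card V > 0" using finV A by (metis card_gt_0_iff subset_empty)
    have n0pos: "real n0 > 0" using Vpos cV by simp
    have "4 * real c / real n0 * real (card A) * real (card (V - A)) / real (card V)
        = 4 * real c / real n0 * (real (card A) * real (card V - card A)) / real (card V)"
      using cVA by simp
    also have "\<dots> \<le> 4 * real c / real n0 * (real (card V) * real (card V) / 4) / real (card V)"
      using amgm[OF cA] c n0pos Vpos by (intro divide_right_mono mult_left_mono) auto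
    also have "\<dots> = real c * (real (card V) / real n0)" using Vpos n0pos by (simp add: field_simps)
    also have "\<dots> \<le> real c * 1"
      using cV n0pos c by (intro mult_left_mono) (auto simp: divide_le_eq_1)
    also have "\<dots> \<le> real (card (edge_boundary V E A))" using bd[OF ne] by simp
    finally show ?thesis .
  qed
qed

lemma prop_around:
  fixes N :: nat
  assumes p: "p < N" "P (f p)" and step: "\<forall>j<N. P (f j) \<longrightarrow> P (f ((j + 1) mod N))" and q: "q < N"
  shows "P (f q)"
proof -
  have all: "P (f ((p + t) mod N))" for t
  proof (induction t)
    case 0 then show ?case using p by simp
  next
    case (Suc t)
    have "(p + Suc t) mod N = ((p + t) mod N + 1) mod N" by (simp add: mod_Suc_eq)
    moreover have "(p + t) mod N < N" using p by simp
    ultimately show ?case using step Suc by metis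
  qed
  have "(p + (N - p + q)) mod N = q" using p q by simp
  then show ?thesis using all[of "N - p + q"] by simp
qed

lemma cycle_boundary2:
  assumes cyc: "is_cycle_graph V E" and finV: "finite V" and A: "A \<subseteq> V" "A \<noteq> {}" "A \<noteq> V"
  shows "card (edge_boundary V E A) \<ge> 2"
proof -
  let ?N = "card V"
  obtain f where bij: "bij_betw f {0..<?N} V"
    and Ech: "\<forall>x y. E x y \<longleftrightarrow> (\<exists>i<?N. \<exists>j<?N. x = f i \<and> y = f j \<and>
        (j = (i + 1) mod ?N \<or> i = (j + 1) mod ?N))"
    using cyc unfolding is_cycle_graph_def by blast
  have N3: "?N \<ge> 3" using cyc unfolding is_cycle_graph_def by simp
  have inj: "\<And>a b. a < ?N \<Longrightarrow> b < ?N \<Longrightarrow> f a = f b \<Longrightarrow> a = b"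
    using bij unfolding bij_betw_def inj_on_def by auto
  have img: "f ` {0..<?N} = V" using bij by (simp add: bij_betw_def)
  have fin: "\<And>i. i < ?N \<Longrightarrow> f i \<in> V" using img by auto
  obtain a where a: "a \<in> A" using A by blast
  then obtain pa where pa: "pa < ?N" "f pa = a" using img A by (metis atLeastLessThan_iff imageE subsetD)
  obtain b where b: "b \<in> V" "b \<notin> A" using A by blast
  then obtain pb where pb: "pb < ?N" "f pb = b" using img by (metis atLeastLessThan_iff imageE)
  have "\<exists>j<?N. f j \<in> A \<and> f ((j + 1) mod ?N) \<notin> A"
  proof (rule ccontr)
    assume "\<not> ?thesis"
    then have "\<forall>j<?N. f j \<in> A \<longrightarrow> f ((j + 1) mod ?N) \<in> A" by blast
    from prop_around[of pa ?N "\<lambda>x. x \<in> A" f, OF pa(1) _ this pb(1)] pa a pb b show False by simp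
  qed
  then obtain j where j: "j < ?N" "f j \<in> A" "f ((j + 1) mod ?N) \<notin> A" by blast
  have "\<exists>j<?N. f j \<notin> A \<and> f ((j + 1) mod ?N) \<in> A"
  proof (rule ccontr)
    assume "\<not> ?thesis"
    then have "\<forall>j<?N. f j \<notin> A \<longrightarrow> f ((j + 1) mod ?N) \<notin> A" by blast
    from prop_around[of pb ?N "\<lambda>x. x \<notin> A" f, OF pb(1) _ this pa(1)] pa a pb b show False by simp
  qed
  then obtain j' where j': "j' < ?N" "f j' \<notin> A" "f ((j' + 1) mod ?N) \<in> A" by blast
  have jN: "(j + 1) mod ?N < ?N" "(j' + 1) mod ?N < ?N" using j j' by simp_all
  have e1: "E (f j) (f ((j + 1) mod ?N))" unfolding Ech[rule_format] using j jN by blast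
  have e2: "E (f ((j' + 1) mod ?N)) (f j')" unfolding Ech[rule_format] using j' jN by blast
  have p1: "(f j, f ((j + 1) mod ?N)) \<in> edge_boundary V E A"
    unfolding edge_boundary_def using j e1 fin jN by auto
  have p2: "(f ((j' + 1) mod ?N), f j') \<in> edge_boundary V E A"
    unfolding edge_boundary_def using j' e2 fin jN by auto
  have ne: "(f j, f ((j + 1) mod ?N)) \<noteq> (f ((j' + 1) mod ?N), f j')"
  proof
    assume "(f j, f ((j + 1) mod ?N)) = (f ((j' + 1) mod ?N), f j')"
    then have "f j = f ((j' + 1) mod ?N)" "f ((j + 1) mod ?N) = f j'" by auto
    then have h: "j = (j' + 1) mod ?N" "(j + 1) mod ?N = j'" using inj j j' jN by blast+
    then have "j = ((j + 1) mod ?N + 1) mod ?N" by simp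
    then show False using j(1) N3 by (auto simp: mod_if split: if_splits)
  qed
  have finE: "finite (edge_boundary V E A)"
    by (rule finite_subset[of _ "V \<times> V"]) (use finV A in \<open>auto simp: edge_boundary_def\<close>)
  have "card {(f j, f ((j + 1) mod ?N)), (f ((j' + 1) mod ?N), f j')} = 2" using ne by simp
  moreover have "card {(f j, f ((j + 1) mod ?N)), (f ((j' + 1) mod ?N), f j')} \<le> card (edge_boundary V E A)"
    by (rule card_mono[OF finE]) (use p1 p2 in auto)
  ultimately show ?thesis by simp
qed



lemma maxdeg_le:
  assumes "finite V" "V \<noteq> {}" "\<forall>x\<in>V. degree V E x \<le> d"
  shows "max_degree V E \<le> d"
  unfolding max_degree_def using assms by (subst Max_le_iff) auto

lemma card2_le: "card {a, b} \<le> 2" by (simp add: card_insert_if)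

lemma path_maxdeg:
  assumes pg: "is_path_graph V E" and finV: "finite V" and ne: "V \<noteq> {}"
  shows "max_degree V E \<le> 2"
proof (rule maxdeg_le[OF finV ne], rule ballI)
  let ?N = "card V"
  obtain f where bij: "bij_betw f {0..<?N} V"
    and Ech: "\<forall>x y. E x y \<longleftrightarrow> (\<exists>i<?N. \<exists>j<?N. x = f i \<and> y = f j \<and> (i + 1 = j \<or> j + 1 = i))"
    using pg unfolding is_path_graph_def by blast
  have inj: "\<And>a b. a < ?N \<Longrightarrow> b < ?N \<Longrightarrow> f a = f b \<Longrightarrow> a = b"
    using bij unfolding bij_betw_def inj_on_def by auto
  fix x assume "x \<in> V"
  then obtain i where i: "i < ?N" "x = f i" using bij unfolding bij_betw_def by (metis atLeastLessThan_iff imageE)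
  have "{y \<in> V. E x y} \<subseteq> {f (i + 1), f (i - 1)}"
  proof
    fix y assume "y \<in> {y \<in> V. E x y}"
    then obtain i' j where h: "i' < ?N" "j < ?N" "x = f i'" "y = f j" "i' + 1 = j \<or> j + 1 = i'"
      by (auto simp: Ech)
    have "i' = i" using inj[OF h(1) i(1)] h(3) i(2) by simp
    then show "y \<in> {f (i + 1), f (i - 1)}" using h by auto
  qed
  then have "degree V E x \<le> card {f (i + 1), f (i - 1)}" unfolding degree_def by (rule card_mono[rotated]) simp
  then show "degree V E x \<le> 2" by (rule order_trans[OF _ card2_le])
qed

lemma cycle_maxdeg:
  assumes cg: "is_cycle_graph V E" and finV: "finite V" and ne: "V \<noteq> {}"
  shows "max_degree V E \<le> 2"
proof (rule maxdeg_le[OF finV ne], rule ballI)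
  let ?N = "card V"
  obtain f where bij: "bij_betw f {0..<?N} V"
    and Ech: "\<forall>x y. E x y \<longleftrightarrow> (\<exists>i<?N. \<exists>j<?N. x = f i \<and> y = f j \<and>
        (j = (i + 1) mod ?N \<or> i = (j + 1) mod ?N))"
    using cg unfolding is_cycle_graph_def by blast
  have inj: "\<And>a b. a < ?N \<Longrightarrow> b < ?N \<Longrightarrow> f a = f b \<Longrightarrow> a = b"
    using bij unfolding bij_betw_def inj_on_def by auto
  fix x assume "x \<in> V"
  then obtain i where i: "i < ?N" "x = f i" using bij unfolding bij_betw_def by (metis atLeastLessThan_iff imageE)
  let ?p = "if i = 0 then ?N - 1 else i - 1"
  have "{y \<in> V. E x y} \<subseteq> {f ((i + 1) mod ?N), f ?p}"
  proof
    fix y assume "y \<in> {y \<in> V. E x y}"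
    then obtain i' j where h: "i' < ?N" "j < ?N" "x = f i'" "y = f j" "j = (i' + 1) mod ?N \<or> i' = (j + 1) mod ?N"
      by (auto simp: Ech)
    have ii: "i' = i" using inj[OF h(1) i(1)] h(3) i(2) by simp
    have "j = (i + 1) mod ?N \<or> j = ?p"
    proof (cases "j = (i' + 1) mod ?N")
      case True then show ?thesis using ii by simp
    next
      case False
      then have e: "i = (j + 1) mod ?N" using h(5) ii by simp
      show ?thesis
      proof (cases "j + 1 < ?N")
        case True then show ?thesis using e by simp
      next
        case False
        then have "j + 1 = ?N" using h(2) by simp
        then have "i = 0" "j = ?N - 1" using e by auto
        then show ?thesis by simp
      qed
    qed
    then show "y \<in> {f ((i + 1) mod ?N), f ?p}" using h by auto
  qed
  then have "degree V E x \<le> card {f ((i + 1) mod ?N), f ?p}" unfolding degree_def by (rule card_mono[rotated]) simp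
  then show "degree V E x \<le> 2" by (rule order_trans[OF _ card2_le])
qed



lemma lower_general:
  assumes sg: "simple_graph V E" and deg: "\<forall>v\<in>V. degree V E v \<le> \<Delta>"
    and iso: "\<forall>T\<subseteq>V. \<beta> * real (card T) * real (card (V - T)) / real (card V) \<le> real (card (edge_boundary V E T))"
    and n2: "card V \<ge> 2"
  shows "\<beta> * real (card V) / (4 * (real \<Delta>)^2) \<le> real (c_inf V E)"
proof (rule c_inf_ge)
  show "finite V" using sg by (simp add: simple_graph_def)
  fix k assume k: "real k < \<beta> * real (card V) / (4 * (real \<Delta>)^2)"
  show "\<not> cops_win V E k"
  proof (cases "\<Delta> = 0")
    case True then show ?thesis using k by simp
  next
    case False
    then have pos: "4 * (real \<Delta>)^2 > 0" by simp
    then have "real k * (4 * (real \<Delta>)^2) < \<beta> * real (card V)" using k by (simp add: pos_less_divide_eq)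
    then have "4 * real k * (real \<Delta>)^2 < \<beta> * real (card V)" by (simp add: algebra_simps)
    then show ?thesis by (rule robber_core[OF sg deg iso n2])
  qed
qed

lemma fac_mono:
  assumes "\<gamma> \<le> \<iota>" "\<iota> * real a * real b / real c \<le> x"
  shows "\<gamma> * real a * real b / real c \<le> x"
proof -
  have "\<gamma> * (real a * real b / real c) \<le> \<iota> * (real a * real b / real c)"
    using assms(1) by (intro mult_right_mono) auto
  then show ?thesis using assms(2) by simp
qed

theorem mainTheorem7:
  fixes m :: nat and V :: "nat \<Rightarrow> 'a set" and E :: "nat \<Rightarrow> 'a \<Rightarrow> 'a \<Rightarrow> bool"
  assumes "1 \<le> m"
    and "\<forall>i<m. simple_graph (V i) (E i)"
    and "\<forall>i<m. connected_graph (V i) (E i)"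
    and "\<forall>i<m. 2 \<le> card (V i)"
  shows
   "(let n = card (prod_V m V); c = real (c_inf (prod_V m V) (prod_E m V E)) in
     (Min ((\<lambda>i. edge_iso (V i) (E i)) ` {0..<m}) * real n
        / (4 * (real (\<Sum>i<m. max_degree (V i) (E i)))^2) \<le> c
      \<and> (\<forall>j<m. c \<le> real n * real (c_inf (V j) (E j)) / real (card (V j))))
   \<and> ((\<forall>i<m. is_path_graph (V i) (E i)) \<and> (\<forall>i<m. card (V i) \<le> card (V 0)) \<longrightarrow>
        real n / (4 * real (card (V 0)) * (real m)^2) \<le> c \<and> c \<le> real n / real (card (V 0)))
   \<and> ((\<forall>i<m. is_cycle_graph (V i) (E i)) \<and> (\<forall>i<m. card (V i) \<le> card (V 0))
        \<and> even (card (V 0)) \<longrightarrow>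
        real n / (2 * real (card (V 0)) * (real m)^2) \<le> c \<and> c \<le> 2 * real n / real (card (V 0))))"
proof -
  let ?P = "prod_V m V" and ?G = "prod_E m V E"
  let ?n = "card ?P" and ?c = "real (c_inf ?P ?G)"
  have sg: "\<forall>i<m. simple_graph (V i) (E i)" using assms(2) .
  have fin: "\<forall>i<m. finite (V i)" using sg by (simp add: simple_graph_def)
  have Vne: "\<forall>i<m. V i \<noteq> {}" using assms(4) by (metis card.empty not_numeral_le_zero)
  have fin2: "\<forall>i<m. finite (V i) \<and> V i \<noteq> {}" using fin Vne by blast
  have m0: "0 < m" using assms(1) by simp
  have sgP: "simple_graph ?P ?G" by (rule prod_simple[OF fin sg])
  have n2: "?n \<ge> 2" by (rule prod_card_ge2[OF fin assms(4,1)])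
  have degP: "\<forall>v\<in>?P. degree ?P ?G v \<le> (\<Sum>i<m. max_degree (V i) (E i))"
    using prod_degree[OF fin sg] by blast
  have upper: "\<forall>j<m. ?c \<le> real ?n * real (c_inf (V j) (E j)) / real (card (V j))"
    using upper_bound[OF fin] sg Vne by blast
  let ?\<beta> = "Min ((\<lambda>i. edge_iso (V i) (E i)) ` {0..<m})"
  have ble: "?\<beta> \<le> edge_iso (V i) (E i)" if "i < m" for i
    using that by (intro Min_le) auto
  have b0: "0 \<le> ?\<beta>"
  proof -
    have "?\<beta> \<in> (\<lambda>i. edge_iso (V i) (E i)) ` {0..<m}" using m0 by (intro Min_in) auto
    then obtain i where "i < m" "?\<beta> = edge_iso (V i) (E i)" by auto
    then show ?thesis using iso_factor(1)[of "V i" "E i"] sg assms(4) by auto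
  qed
  have facA: "\<forall>i<m. \<forall>A\<subseteq>V i. ?\<beta> * real (card A) * real (card (V i - A)) / real (card (V i))
                  \<le> real (card (edge_boundary (V i) (E i) A))"
  proof (intro allI impI)
    fix i A assume i: "i < m" and A: "A \<subseteq> V i"
    show "?\<beta> * real (card A) * real (card (V i - A)) / real (card (V i))
                  \<le> real (card (edge_boundary (V i) (E i) A))"
      by (rule fac_mono[OF ble[OF i] iso_factor(2)]) (use sg assms(4) i A in auto)
  qed
  have isoA: "\<forall>T\<subseteq>?P. ?\<beta> * real (card T) * real (card (?P - T)) / real ?n \<le> real (card (edge_boundary ?P ?G T))"
    using prod_iso[OF fin2 sg b0 facA] by blast
  have lowA: "?\<beta> * real ?n / (4 * (real (\<Sum>i<m. max_degree (V i) (E i)))^2) \<le> ?c"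
    by (rule lower_general[OF sgP degP isoA n2])
  let ?nz = "card (V 0)"
  have n0: "real ?nz \<ge> 2" using assms(4) m0 by simp
  have mpos: "real m > 0" using m0 by simp
  have partB: "real ?n / (4 * real ?nz * (real m)^2) \<le> ?c \<and> ?c \<le> real ?n / real ?nz"
    if paths: "\<forall>i<m. is_path_graph (V i) (E i)" and mx: "\<forall>i<m. card (V i) \<le> card (V 0)"
  proof -
    have fac: "\<forall>i<m. \<forall>A\<subseteq>V i. (4 / real ?nz) * real (card A) * real (card (V i - A)) / real (card (V i))
                  \<le> real (card (edge_boundary (V i) (E i) A))"
    proof (intro allI impI)
      fix i A assume i: "i < m" and A: "A \<subseteq> V i"
      have "4 * real (1::nat) / real ?nz * real (card A) * real (card (V i - A)) / real (card (V i))
                  \<le> real (card (edge_boundary (V i) (E i) A))"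
        by (rule small_factor) (use sg i mx A conn_boundary[of "V i" "E i" A] assms(3) in auto)
      then show "(4 / real ?nz) * real (card A) * real (card (V i - A)) / real (card (V i))
                  \<le> real (card (edge_boundary (V i) (E i) A))" by simp
    qed
    have g0: "0 \<le> 4 / real ?nz" by simp
    have iso: "\<forall>T\<subseteq>?P. (4 / real ?nz) * real (card T) * real (card (?P - T)) / real ?n \<le> real (card (edge_boundary ?P ?G T))"
      using prod_iso[OF fin2 sg g0 fac] by blast
    have md: "(\<Sum>i<m. max_degree (V i) (E i)) \<le> 2 * m"
    proof -
      have "(\<Sum>i<m. max_degree (V i) (E i)) \<le> (\<Sum>i<m. 2)"
      proof (intro sum_mono)
        fix i assume "i \<in> {..<m}"
        then have i: "i < m" by simp
        show "max_degree (V i) (E i) \<le> 2" using path_maxdeg[of "V i" "E i"] paths fin Vne i by simp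
      qed
      then show ?thesis by simp
    qed
    have deg: "\<forall>v\<in>?P. degree ?P ?G v \<le> 2 * m"
    proof
      fix v assume "v \<in> ?P"
      from degP[rule_format, OF this] md show "degree ?P ?G v \<le> 2 * m" by (rule le_trans)
    qed
    have "(4 / real ?nz) * real ?n / (4 * (real (2 * m))^2) \<le> ?c"
      by (rule lower_general[OF sgP deg iso n2])
    moreover have "(4 / real ?nz) * real ?n / (4 * (real (2 * m))^2) = real ?n / (4 * real ?nz * (real m)^2)"
      using n0 mpos by (simp add: field_simps power2_eq_square)
    ultimately have L: "real ?n / (4 * real ?nz * (real m)^2) \<le> ?c" by simp
    have "c_inf (V 0) (E 0) \<le> 1" using path_c_inf[of "V 0" "E 0"] paths fin Vne m0 by blast
    then have "real ?n * real (c_inf (V 0) (E 0)) / real ?nz \<le> real ?n * 1 / real ?nz"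
      using n0 by (intro divide_right_mono mult_left_mono) auto
    moreover have "?c \<le> real ?n * real (c_inf (V 0) (E 0)) / real ?nz" using upper m0 by blast
    ultimately have U: "?c \<le> real ?n / real ?nz" by simp
    show ?thesis using L U by blast
  qed
  have partC: "real ?n / (2 * real ?nz * (real m)^2) \<le> ?c \<and> ?c \<le> 2 * real ?n / real ?nz"
    if cycs: "\<forall>i<m. is_cycle_graph (V i) (E i)" and mx: "\<forall>i<m. card (V i) \<le> card (V 0)"
  proof -
    have fac: "\<forall>i<m. \<forall>A\<subseteq>V i. (8 / real ?nz) * real (card A) * real (card (V i - A)) / real (card (V i))
                  \<le> real (card (edge_boundary (V i) (E i) A))"
    proof (intro allI impI)
      fix i A assume i: "i < m" and A: "A \<subseteq> V i"
      have "4 * real (2::nat) / real ?nz * real (card A) * real (card (V i - A)) / real (card (V i))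
                  \<le> real (card (edge_boundary (V i) (E i) A))"
        by (rule small_factor) (use sg i mx A cycle_boundary2[of "V i" "E i" A] cycs fin in auto)
      then show "(8 / real ?nz) * real (card A) * real (card (V i - A)) / real (card (V i))
                  \<le> real (card (edge_boundary (V i) (E i) A))" by simp
    qed
    have g0: "0 \<le> 8 / real ?nz" by simp
    have iso: "\<forall>T\<subseteq>?P. (8 / real ?nz) * real (card T) * real (card (?P - T)) / real ?n \<le> real (card (edge_boundary ?P ?G T))"
      using prod_iso[OF fin2 sg g0 fac] by blast
    have md: "(\<Sum>i<m. max_degree (V i) (E i)) \<le> 2 * m"
    proof -
      have "(\<Sum>i<m. max_degree (V i) (E i)) \<le> (\<Sum>i<m. 2)"
      proof (intro sum_mono)
        fix i assume "i \<in> {..<m}"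
        then have i: "i < m" by simp
        show "max_degree (V i) (E i) \<le> 2" using cycle_maxdeg[of "V i" "E i"] cycs fin Vne i by simp
      qed
      then show ?thesis by simp
    qed
    have deg: "\<forall>v\<in>?P. degree ?P ?G v \<le> 2 * m"
    proof
      fix v assume "v \<in> ?P"
      from degP[rule_format, OF this] md show "degree ?P ?G v \<le> 2 * m" by (rule le_trans)
    qed
    have "(8 / real ?nz) * real ?n / (4 * (real (2 * m))^2) \<le> ?c"
      by (rule lower_general[OF sgP deg iso n2])
    moreover have "(8 / real ?nz) * real ?n / (4 * (real (2 * m))^2) = real ?n / (2 * real ?nz * (real m)^2)"
      using n0 mpos by (simp add: field_simps power2_eq_square)
    ultimately have L: "real ?n / (2 * real ?nz * (real m)^2) \<le> ?c" by simp
    have "c_inf (V 0) (E 0) \<le> 2" using cycle_c_inf[of "V 0" "E 0"] cycs fin m0 by blast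
    then have b: "real ?n * real (c_inf (V 0) (E 0)) / real ?nz \<le> real ?n * 2 / real ?nz"
      using n0 by (intro divide_right_mono mult_left_mono) auto
    have a: "?c \<le> real ?n * real (c_inf (V 0) (E 0)) / real ?nz" using upper m0 by blast
    have "?c \<le> real ?n * 2 / real ?nz" using order_trans[OF a b] .
    then have U: "?c \<le> 2 * real ?n / real ?nz" by (simp add: mult.commute)
    show ?thesis using L U by blast
  qed
  have A: "?\<beta> * real ?n / (4 * (real (\<Sum>i<m. max_degree (V i) (E i)))^2) \<le> ?c
      \<and> (\<forall>j<m. ?c \<le> real ?n * real (c_inf (V j) (E j)) / real (card (V j)))"
    by (rule conjI[OF lowA upper])
  have B: "(\<forall>i<m. is_path_graph (V i) (E i)) \<and> (\<forall>i<m. card (V i) \<le> card (V 0)) \<longrightarrow>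
        real ?n / (4 * real ?nz * (real m)^2) \<le> ?c \<and> ?c \<le> real ?n / real ?nz"
    by (intro impI, elim conjE, rule partB)
  have C: "(\<forall>i<m. is_cycle_graph (V i) (E i)) \<and> (\<forall>i<m. card (V i) \<le> card (V 0))
        \<and> even (card (V 0)) \<longrightarrow>
        real ?n / (2 * real ?nz * (real m)^2) \<le> ?c \<and> ?c \<le> 2 * real ?n / real ?nz"
    by (intro impI, elim conjE, rule partC)
  show ?thesis unfolding Let_def by (rule conjI[OF A conjI[OF B C]])
qed


end
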